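(* Let $G$ be a simple, undirected, connected bipartite graph on $N$ vertices with edge set $E$ and degrees $d_j$. Let $\lambda_2$ be the second largest eigenvalue of the transition matrix $P$ of the simple random walk on $G$, and set $$k=\left\lfloor\frac{\lambda_2(N-1)+1}{\lambda_2+1}\right\rfloor,\qquad \theta=\lambda_2(N-k-2)-k+2.$$ Then $$R^+(G)\le N\left(\frac12+\frac{N-k-3}{1-\lambda_2}+\frac{k}{2}+\frac{1}{\theta}\right)+\frac{1}{1-\lambda_2}\left(2|E|\sum_{j}\frac{1}{d_j}-N\right).$$
   Context: $P=(p(v,w))$ is the $N\times N$ matrix with $p(v,w)=1/d_v$ if $v,w$ are adjacent and $0$ otherwise; its eigenvalues are real, $1=\lambda_1>\lambda_2\ge\cdots\ge\lambda_N\ge-1$. For vertices $i,j$, $R_{ij}$ denotes the effective resistance between $i$ and $j$ when every edge is a unit resistor. The additive degree-Kirchhoff index is $R^+(G)=\sum_{i<j}(d_i+d_j)R_{ij}$. *)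

theory Defs
  imports "Jordan_Normal_Form.Char_Poly" "HOL-Library.Multiset"
begin

definition simple_graph :: "nat \<Rightarrow> (nat \<Rightarrow> nat \<Rightarrow> bool) \<Rightarrow> bool" where
  "simple_graph N E \<longleftrightarrow>
     (\<forall>u v. E u v \<longrightarrow> u < N \<and> v < N) \<and>
     (\<forall>u v. E u v \<longrightarrow> E v u) \<and> (\<forall>u. \<not> E u u)"

definition connected_graph :: "nat \<Rightarrow> (nat \<Rightarrow> nat \<Rightarrow> bool) \<Rightarrow> bool" where
  "connected_graph N E \<longleftrightarrow> (\<forall>u<N. \<forall>v<N. E\<^sup>*\<^sup>* u v)"

definition bipartite_graph :: "nat \<Rightarrow> (nat \<Rightarrow> nat \<Rightarrow> bool) \<Rightarrow> bool" where
  "bipartite_graph N E \<longleftrightarrow>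
     (\<exists>S. S \<subseteq> {0..<N} \<and> (\<forall>u v. E u v \<longrightarrow> (u \<in> S \<longleftrightarrow> v \<notin> S)))"

definition deg :: "nat \<Rightarrow> (nat \<Rightarrow> nat \<Rightarrow> bool) \<Rightarrow> nat \<Rightarrow> nat" where
  "deg N E v = card {w \<in> {0..<N}. E v w}"

definition num_edges :: "nat \<Rightarrow> (nat \<Rightarrow> nat \<Rightarrow> bool) \<Rightarrow> nat" where
  "num_edges N E = card {(u, v). u < v \<and> v < N \<and> E u v}"

definition trans_mat :: "nat \<Rightarrow> (nat \<Rightarrow> nat \<Rightarrow> bool) \<Rightarrow> real mat" where
  "trans_mat N E = mat N N (\<lambda>(v, w). if E v w then 1 / real (deg N E v) else 0)"

text \<open>Eigenvalues of P with multiplicity (roots of the characteristic polynomial),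
  listed in non-increasing order: lambda_1 \<ge> lambda_2 \<ge> ... \<close>
definition trans_eigenvalues :: "nat \<Rightarrow> (nat \<Rightarrow> nat \<Rightarrow> bool) \<Rightarrow> real list" where
  "trans_eigenvalues N E = rev (sorted_list_of_multiset (proots (char_poly (trans_mat N E))))"

definition lambda2 :: "nat \<Rightarrow> (nat \<Rightarrow> nat \<Rightarrow> bool) \<Rightarrow> real" where
  "lambda2 N E = trans_eigenvalues N E ! 1"

definition laplacian_apply :: "nat \<Rightarrow> (nat \<Rightarrow> nat \<Rightarrow> bool) \<Rightarrow> (nat \<Rightarrow> real) \<Rightarrow> nat \<Rightarrow> real" where
  "laplacian_apply N E x v = real (deg N E v) * x v - (\<Sum>w\<in>{w \<in> {0..<N}. E v w}. x w)"

text \<open>Effective resistance between i and j (unit resistors): the potential difference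
  x_i - x_j for a potential x with L x = e_i - e_j (unit current in at i, out at j).\<close>
definition eff_resistance :: "nat \<Rightarrow> (nat \<Rightarrow> nat \<Rightarrow> bool) \<Rightarrow> nat \<Rightarrow> nat \<Rightarrow> real" where
  "eff_resistance N E i j =
     (THE r. \<exists>x. (\<forall>v<N. laplacian_apply N E x v =
                      (if v = i then 1 else 0) - (if v = j then 1 else 0)) \<and> r = x i - x j)"

definition add_deg_kirchhoff :: "nat \<Rightarrow> (nat \<Rightarrow> nat \<Rightarrow> bool) \<Rightarrow> real" where
  "add_deg_kirchhoff N E =
     (\<Sum>j<N. \<Sum>i<j. real (deg N E i + deg N E j) * eff_resistance N E i j)"

end

theory Submission
  imports Defs "HOL-Analysis.Analysis"
begin
definition ip :: "nat \<Rightarrow> (nat \<Rightarrow> real) \<Rightarrow> (nat \<Rightarrow> real) \<Rightarrow> real" where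
  "ip n f g = (\<Sum>i<n. f i * g i)"
definition mv :: "nat \<Rightarrow> (nat \<Rightarrow> nat \<Rightarrow> real) \<Rightarrow> (nat \<Rightarrow> real) \<Rightarrow> nat \<Rightarrow> real" where
  "mv n A f i = (\<Sum>j<n. A i j * f j)"
definition symm :: "nat \<Rightarrow> (nat \<Rightarrow> nat \<Rightarrow> real) \<Rightarrow> bool" where
  "symm n A \<longleftrightarrow> (\<forall>i<n. \<forall>j<n. A i j = A j i)"
definition orthonormal :: "nat \<Rightarrow> nat \<Rightarrow> (nat \<Rightarrow> nat \<Rightarrow> real) \<Rightarrow> bool" where
  "orthonormal n r u \<longleftrightarrow> (\<forall>a<r. \<forall>b<r. ip n (u a) (u b) = (if a = b then 1 else 0))"

lemma ip_sym: "ip n f g = ip n g f" unfolding ip_def by (simp add: mult.commute)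
lemma ip_nonneg: "ip n f f \<ge> 0" unfolding ip_def by (auto intro: sum_nonneg)
lemma ip_zero_iff: "ip n f f = 0 \<longleftrightarrow> (\<forall>i<n. f i = 0)"
  unfolding ip_def by (auto simp: sum_nonneg_eq_0_iff)
lemma ip_cong: "(\<And>i. i<n \<Longrightarrow> f i = f' i) \<Longrightarrow> (\<And>i. i<n \<Longrightarrow> g i = g' i) \<Longrightarrow> ip n f g = ip n f' g'"
  unfolding ip_def by (intro sum.cong) auto
lemma ip_lin_left: "ip n (\<lambda>i. a * f i + b * g i) h = a * ip n f h + b * ip n g h"
  unfolding ip_def by (simp add: algebra_simps sum.distrib sum_distrib_left)
lemma ip_scale_left: "ip n (\<lambda>i. a * f i) h = a * ip n f h"
  unfolding ip_def by (simp add: algebra_simps sum_distrib_left)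
lemma ip_scale_right: "ip n h (\<lambda>i. a * f i) = a * ip n h f"
  unfolding ip_def by (simp add: algebra_simps sum_distrib_left)
lemma ip_diff_left: "ip n (\<lambda>i. f i - g i) h = ip n f h - ip n g h"
  unfolding ip_def by (simp add: algebra_simps sum_subtractf)
lemma ip_diff_right: "ip n h (\<lambda>i. f i - g i) = ip n h f - ip n h g"
  unfolding ip_def by (simp add: algebra_simps sum_subtractf)
lemma ip_add_left: "ip n (\<lambda>i. f i + g i) h = ip n f h + ip n g h"
  unfolding ip_def by (simp add: algebra_simps sum.distrib)
lemma ip_add_right: "ip n h (\<lambda>i. f i + g i) = ip n h f + ip n h g"
  unfolding ip_def by (simp add: algebra_simps sum.distrib)

lemma mv_sym:
  assumes "symm n A"
  shows "ip n f (mv n A g) = ip n (mv n A f) g"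
proof -
  have "ip n f (mv n A g) = (\<Sum>i<n. \<Sum>j<n. f i * A i j * g j)"
    by (simp add: ip_def mv_def sum_distrib_left mult.assoc)
  also have "\<dots> = (\<Sum>j<n. \<Sum>i<n. f i * A i j * g j)" by (rule sum.swap)
  also have "\<dots> = (\<Sum>j<n. \<Sum>i<n. A j i * f i * g j)"
    using assms unfolding symm_def by (intro sum.cong refl) (simp add: mult.commute)
  also have "\<dots> = ip n (mv n A f) g" by (simp add: ip_def mv_def sum_distrib_right)
  finally show ?thesis .
qed

lemma sum_delta_lt: assumes "(i::nat) < n" shows "(\<Sum>j<n. f j * (if i = j then 1 else 0)) = (f i :: real)"
proof -
  have "(\<Sum>j<n. f j * (if i = j then 1 else 0)) = (\<Sum>j<n. if j = i then f j else 0)"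
    by (rule sum.cong) auto
  also have "\<dots> = f i" using assms by simp
  finally show ?thesis .
qed

lemma exists_orth_unit:
  assumes on: "orthonormal n r u" and rn: "r < n"
  shows "\<exists>f. ip n f f = 1 \<and> (\<forall>a<r. ip n (u a) f = 0)"
proof -
  define Q where "Q i j = (\<Sum>a<r. u a i * u a j)" for i j
  have tr: "(\<Sum>i<n. Q i i) = real r"
  proof -
    have "(\<Sum>i<n. Q i i) = (\<Sum>a<r. ip n (u a) (u a))"
      unfolding Q_def ip_def by (rule sum.swap)
    also have "\<dots> = (\<Sum>a<r. 1)" using on unfolding orthonormal_def by (intro sum.cong) auto
    finally show ?thesis by simp
  qed
  have "\<exists>i<n. \<exists>j<n. (if i = j then 1 else 0) - Q i j \<noteq> 0"
  proof (rule ccontr)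
    assume "\<not> ?thesis"
    then have "\<And>i. i < n \<Longrightarrow> Q i i = 1" by force
    then have "(\<Sum>i<n. Q i i) = real n" by simp
    with tr rn show False by simp
  qed
  then obtain i where i: "i < n" and ex: "\<exists>j<n. (if i = j then 1 else 0) - Q i j \<noteq> 0" by blast
  define w where "w j = (if i = j then 1 else 0) - Q i j" for j
  have wpos: "ip n w w > 0"
    using ex ip_nonneg[of n w] ip_zero_iff[of n w] unfolding w_def by force
  have worth: "ip n (u a) w = 0" if a: "a < r" for a
  proof -
    have "ip n (u a) w = u a i - (\<Sum>j<n. u a j * Q i j)"
      unfolding w_def ip_diff_right[of n "u a" "\<lambda>j. if i = j then 1 else 0" "Q i"]
      using i by (simp add: ip_def sum_delta_lt)
    also have "(\<Sum>j<n. u a j * Q i j) = (\<Sum>b<r. u b i * ip n (u a) (u b))"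
      unfolding Q_def ip_def by (simp add: sum_distrib_left sum_distrib_right algebra_simps) (rule sum.swap)
    also have "\<dots> = (\<Sum>b<r. u b i * (if a = b then 1 else 0))"
      using on a unfolding orthonormal_def by (intro sum.cong) auto
    also have "\<dots> = u a i" using a on unfolding orthonormal_def by (subst sum_delta_lt[of a r "\<lambda>b. u b i", symmetric]) (auto intro: sum.cong)
    finally show ?thesis by simp
  qed
  define f where "f j = (1 / sqrt (ip n w w)) * w j" for j
  have "ip n f f = 1"
    unfolding f_def ip_scale_left ip_scale_right using wpos
    by (simp add: field_simps)
  moreover have "\<forall>a<r. ip n (u a) f = 0"
    unfolding f_def ip_scale_right using worth by simp
  ultimately show ?thesis by blast
qed

lemma mult_mat_entry:
  assumes "A \<in> carrier_mat n m" "B \<in> carrier_mat m p" "i < n" "j < p"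
  shows "(A * B) $$ (i,j) = (\<Sum>k<m. A $$ (i,k) * B $$ (k,j))"
  using assms by (simp add: scalar_prod_def atLeast0LessThan)

lemma complete:
  assumes on: "orthonormal n n u" and i: "i < n" and j: "j < n"
  shows "(\<Sum>k<n. u k i * u k j) = (if i = j then 1 else 0)"
proof -
  define U where "U = Matrix.mat n n (\<lambda>(i,k). u k i)"
  have U: "U \<in> carrier_mat n n" unfolding U_def by simp
  have UT: "transpose_mat U \<in> carrier_mat n n" using U by simp
  have "transpose_mat U * U = 1\<^sub>m n"
  proof (rule eq_matI)
    fix a b assume a: "a < dim_row (1\<^sub>m n)" and b: "b < dim_col (1\<^sub>m n)"
    have "(transpose_mat U * U) $$ (a, b) = (\<Sum>k<n. u a k * u b k)"
      using a b by (subst mult_mat_entry[OF UT U]) (auto simp: U_def)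
    also have "\<dots> = 1\<^sub>m n $$ (a,b)" using on a b unfolding orthonormal_def ip_def by auto
    finally show "(transpose_mat U * U) $$ (a, b) = 1\<^sub>m n $$ (a,b)" .
  qed (use U in auto)
  from mat_mult_left_right_inverse[OF UT U this]
  have "U * transpose_mat U = 1\<^sub>m n" .
  then have "(U * transpose_mat U) $$ (i,j) = 1\<^sub>m n $$ (i,j)" by simp
  then show ?thesis using i j by (subst (asm) mult_mat_entry[OF U UT]) (auto simp: U_def)
qed

lemma ip_restrict_left: "ip n (restrict f {..<n}) g = ip n f g"
  unfolding ip_def by (intro sum.cong) auto
lemma ip_restrict_right: "ip n g (restrict f {..<n}) = ip n g f"
  unfolding ip_def by (intro sum.cong) auto
lemma mv_restrict: "mv n A (restrict f {..<n}) = mv n A f"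
  unfolding mv_def by (intro ext sum.cong) auto
lemma comp_le_ip: "(i::nat) < n \<Longrightarrow> (f i)\<^sup>2 \<le> ip n f f"
  unfolding ip_def power2_eq_square by (rule member_le_sum) auto

lemma max_exists:
  fixes r :: nat and u :: "nat \<Rightarrow> nat \<Rightarrow> real"
  assumes ne: "\<exists>f. ip n f f = 1 \<and> (\<forall>a<r. ip n (u a) f = 0)"
  shows "\<exists>f. ip n f f = 1 \<and> (\<forall>a<r. ip n (u a) f = 0) \<and>
    (\<forall>g. ip n g g = 1 \<and> (\<forall>a<r. ip n (u a) g = 0) \<longrightarrow> ip n g (mv n A g) \<le> ip n f (mv n A f))"
proof -
  define X where "X = product_topology (\<lambda>_. euclideanreal) {..<n}"
  define cons where "cons g = (ip n g g - 1)\<^sup>2 + (\<Sum>a<r. (ip n (u a) g)\<^sup>2)" for g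
  define q where "q g = ip n g (mv n A g)" for g
  define K where "K = PiE {..<n} (\<lambda>_. {-1..1::real})"
  define C where "C = {g \<in> topspace X. cons g \<in> {0}} \<inter> K"
  have proj: "continuous_map X euclideanreal (\<lambda>g. g i)" if "i \<in> {..<n}" for i
    unfolding X_def using continuous_map_product_projection[OF that, of "\<lambda>_. euclideanreal"] by simp
  have cip: "continuous_map X euclideanreal (\<lambda>g. ip n g g)"
    unfolding ip_def by (intro continuous_intros proj finite_lessThan)
  have cip2: "continuous_map X euclideanreal (\<lambda>g. ip n v g)" for v
    unfolding ip_def by (intro continuous_intros proj finite_lessThan)
  have ccons: "continuous_map X euclideanreal cons"
    unfolding cons_def by (intro continuous_intros cip cip2 finite_lessThan) auto
  have cq: "continuous_map X euclideanreal q"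
    unfolding q_def ip_def mv_def by (intro continuous_intros proj finite_lessThan)
  have Kc: "compactin X K"
    unfolding X_def K_def compactin_PiE by auto
  have cl: "closedin X {g \<in> topspace X. cons g \<in> {0}}"
    by (rule closedin_continuous_map_preimage[OF ccons]) (simp flip: closed_closedin)
  have Cc: "compactin X C" unfolding C_def by (rule closed_Int_compactin[OF cl Kc])
  have qC: "compact (q ` C)" using image_compactin[OF Cc cq] by simp
  have memC: "restrict g {..<n} \<in> C" if g: "ip n g g = 1" "\<forall>a<r. ip n (u a) g = 0" for g
  proof -
    have "cons (restrict g {..<n}) = 0"
      unfolding cons_def ip_restrict_left ip_restrict_right using g by simp
    moreover have "restrict g {..<n} \<in> K"
    proof -
      have "\<bar>g i\<bar> \<le> 1" if "i < n" for i
        using comp_le_ip[OF that, of g] g(1) by (simp add: abs_square_le_1)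
      then show ?thesis unfolding K_def by (force simp: abs_le_iff)
    qed
    moreover have "restrict g {..<n} \<in> topspace X"
      unfolding X_def topspace_product_topology by auto
    ultimately show ?thesis unfolding C_def by auto
  qed
  have Cprop: "ip n g g = 1 \<and> (\<forall>a<r. ip n (u a) g = 0)" if "g \<in> C" for g
  proof -
    have "cons g = 0" using that unfolding C_def by auto
    then have "(ip n g g - 1)\<^sup>2 = 0 \<and> (\<Sum>a<r. (ip n (u a) g)\<^sup>2) = 0"
      unfolding cons_def by (simp add: add_nonneg_eq_0_iff sum_nonneg)
    then show ?thesis by (simp add: sum_nonneg_eq_0_iff)
  qed
  from ne obtain f0 where "ip n f0 f0 = 1" "\<forall>a<r. ip n (u a) f0 = 0" by blast
  from memC[OF this] have "q ` C \<noteq> {}" by blast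
  from compact_attains_sup[OF qC this] obtain s where s: "s \<in> q ` C" "\<forall>t\<in>q ` C. t \<le> s" by blast
  then obtain f where f: "f \<in> C" "s = q f" by blast
  show ?thesis
  proof (intro exI conjI)
    show "ip n f f = 1" "\<forall>a<r. ip n (u a) f = 0" using Cprop[OF f(1)] by auto
    show "\<forall>g. ip n g g = 1 \<and> (\<forall>a<r. ip n (u a) g = 0) \<longrightarrow> ip n g (mv n A g) \<le> ip n f (mv n A f)"
    proof (intro allI impI)
    fix g assume g: "ip n g g = 1 \<and> (\<forall>a<r. ip n (u a) g = 0)"
    have "q (restrict g {..<n}) \<le> s" using s(2) memC g by blast
    then show "ip n g (mv n A g) \<le> ip n f (mv n A f)"
      using f(2) unfolding q_def mv_restrict ip_restrict_left by simp
  qed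
  qed
qed

lemma mv_lin: "mv n A (\<lambda>i. f i + t * z i) = (\<lambda>i. mv n A f i + t * mv n A z i)"
  unfolding mv_def by (simp add: algebra_simps sum.distrib sum_distrib_left)
lemma mv_scale: "mv n A (\<lambda>i. s * f i) = (\<lambda>i. s * mv n A f i)"
  unfolding mv_def by (simp add: algebra_simps sum_distrib_left)

lemma eigen_step:
  fixes r :: nat and u :: "nat \<Rightarrow> nat \<Rightarrow> real" and lam :: "nat \<Rightarrow> real"
  assumes S: "symm n A" and on: "orthonormal n r u"
    and ev: "\<forall>a<r. \<forall>i<n. mv n A (u a) i = lam a * u a i" and rn: "r < n"
  shows "\<exists>f c. ip n f f = 1 \<and> (\<forall>a<r. ip n (u a) f = 0) \<and> (\<forall>i<n. mv n A f i = c * f i)"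
proof -
  obtain f where f1: "ip n f f = 1" and fo: "\<forall>a<r. ip n (u a) f = 0"
    and fmax: "\<forall>g. ip n g g = 1 \<and> (\<forall>a<r. ip n (u a) g = 0) \<longrightarrow> ip n g (mv n A g) \<le> ip n f (mv n A f)"
    using max_exists[OF exists_orth_unit[OF on rn]] by blast
  define c where "c = ip n f (mv n A f)"
  define z where "z i = mv n A f i - c * f i" for i
  have zo: "ip n (u a) z = 0" if a: "a < r" for a
  proof -
    have "ip n (u a) z = ip n (u a) (mv n A f) - c * ip n (u a) f"
      unfolding z_def ip_diff_right ip_scale_right ..
    also have "ip n (u a) (mv n A f) = ip n (mv n A (u a)) f" by (rule mv_sym[OF S])
    also have "\<dots> = ip n (\<lambda>i. lam a * u a i) f" using ev a by (intro ip_cong) auto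
    also have "\<dots> = 0" using fo a by (simp add: ip_scale_left)
    finally show ?thesis using fo a by simp
  qed
  have zf: "ip n f z = 0" unfolding z_def ip_diff_right ip_scale_right c_def using f1 by simp
  define Z where "Z = ip n z z"
  have zm: "ip n z (mv n A f) = Z"
  proof -
    have "ip n z (mv n A f) = ip n z (\<lambda>i. z i + c * f i)" by (intro ip_cong) (auto simp: z_def)
    also have "\<dots> = Z + c * ip n z f" unfolding ip_add_right ip_scale_right Z_def ..
    finally show ?thesis using zf ip_sym[of n z f] by simp
  qed
  have "Z = 0"
  proof (rule ccontr)
    assume "Z \<noteq> 0"
    then have Zp: "Z > 0" using ip_nonneg[of n z] unfolding Z_def by linarith
    define b where "b = ip n z (mv n A z)"
    define t where "t = Z / (\<bar>b - c * Z\<bar> + 1)"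
    have tp: "t > 0" using Zp unfolding t_def by (simp add: add_nonneg_pos)
    define g where "g i = f i + t * z i" for i
    have gg: "ip n g g = 1 + t\<^sup>2 * Z"
      unfolding g_def using f1 zf ip_sym[of n z f]
      by (simp add: ip_add_left ip_add_right ip_scale_left ip_scale_right Z_def power2_eq_square algebra_simps)
    have fmz: "ip n f (mv n A z) = Z"
      using mv_sym[OF S, of f z] ip_sym[of n "mv n A f" z] zm by simp
    have gq: "ip n g (mv n A g) = c + 2 * t * Z + t\<^sup>2 * b"
      unfolding g_def mv_lin using fmz zm
      by (simp add: ip_add_left ip_add_right ip_scale_left ip_scale_right c_def b_def power2_eq_square algebra_simps)
    have go: "\<forall>a<r. ip n (u a) g = 0"
      unfolding g_def using fo zo by (simp add: ip_add_right ip_scale_right)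
    have pos: "1 + t\<^sup>2 * Z > 0" using Zp by (simp add: add_pos_nonneg)
    define s where "s = 1 / sqrt (1 + t\<^sup>2 * Z)"
    have s2: "s\<^sup>2 = 1 / (1 + t\<^sup>2 * Z)" unfolding s_def using pos by (simp add: power_divide)
    define h where "h i = s * g i" for i
    have hh: "ip n h h = 1" unfolding h_def ip_scale_left ip_scale_right gg
      using s2 pos by (simp add: power2_eq_square field_simps)
    have ho: "\<forall>a<r. ip n (u a) h = 0" unfolding h_def ip_scale_right using go by simp
    have "ip n h (mv n A h) \<le> c" using fmax hh ho unfolding c_def by blast
    moreover have "ip n h (mv n A h) = s\<^sup>2 * (c + 2 * t * Z + t\<^sup>2 * b)"
      unfolding h_def mv_scale ip_scale_left ip_scale_right gq by (simp add: power2_eq_square)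
    ultimately have "(c + 2 * t * Z + t\<^sup>2 * b) / (1 + t\<^sup>2 * Z) \<le> c" using s2 by simp
    then have "c + 2 * t * Z + t\<^sup>2 * b \<le> c * (1 + t\<^sup>2 * Z)"
      using pos by (simp add: divide_le_eq)
    then have "t * (2 * Z + t * (b - c * Z)) \<le> 0" by (simp add: power2_eq_square algebra_simps)
    then have A: "2 * Z + t * (b - c * Z) \<le> 0" using tp by (simp add: mult_le_0_iff)
    have "t * \<bar>b - c * Z\<bar> < Z"
    proof -
      have "t * \<bar>b - c * Z\<bar> = Z * (\<bar>b - c * Z\<bar> / (\<bar>b - c * Z\<bar> + 1))" unfolding t_def by simp
      also have "\<dots> < Z * 1" using Zp by (intro mult_strict_left_mono) auto
      finally show ?thesis by simp
    qed
    moreover have "t * (b - c * Z) \<ge> - (t * \<bar>b - c * Z\<bar>)"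
    proof -
      have "-(b - c * Z) \<le> \<bar>b - c * Z\<bar>" by simp
      then have "t * (-(b - c * Z)) \<le> t * \<bar>b - c * Z\<bar>" using tp by (intro mult_left_mono) auto
      then show ?thesis by (simp add: algebra_simps)
    qed
    ultimately show False using A Zp by linarith
  qed
  then have "\<forall>i<n. z i = 0" using ip_zero_iff[of n z] unfolding Z_def by simp
  then have "\<forall>i<n. mv n A f i = c * f i" unfolding z_def by simp
  then show ?thesis using f1 fo by blast
qed

lemma spectral_aux:
  assumes S: "symm n A"
  shows "r \<le> n \<Longrightarrow> \<exists>u lam. orthonormal n r u \<and> (\<forall>a<r. \<forall>i<n. mv n A (u a) i = lam a * u a i)"
proof (induction r)
  case 0
  then show ?case unfolding orthonormal_def by auto
next
  case (Suc r)
  then obtain u lam where on: "orthonormal n r u" and ev: "\<forall>a<r. \<forall>i<n. mv n A (u a) i = lam a * u a i"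
    by auto
  from Suc.prems have rn: "r < n" by simp
  obtain f c where f: "ip n f f = 1" "\<forall>a<r. ip n (u a) f = 0" "\<forall>i<n. mv n A f i = c * f i"
    using eigen_step[OF S on ev rn] by blast
  define u' where "u' = u(r := f)"
  define lam' where "lam' = lam(r := c)"
  have "orthonormal n (Suc r) u'"
    unfolding orthonormal_def
  proof (intro allI impI)
    fix a b assume a: "a < Suc r" and b: "b < Suc r"
    show "ip n (u' a) (u' b) = (if a = b then 1 else 0)"
    proof (cases "a = r")
      case True
      show ?thesis
      proof (cases "b = r")
        case True
        then show ?thesis using \<open>a = r\<close> f(1) unfolding u'_def by simp
      next
        case False
        then have "b < r" using b by simp
        then have "ip n (u b) f = 0" using f(2) by blast
        then show ?thesis using \<open>a = r\<close> False ip_sym[of n f "u b"] unfolding u'_def by simp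
      qed
    next
      case False
      then have ar: "a < r" using a by simp
      show ?thesis
      proof (cases "b = r")
        case True
        then show ?thesis using ar False f(2) unfolding u'_def by simp
      next
        case bF: False
        then have "b < r" using b by simp
        then show ?thesis using ar False bF on unfolding u'_def orthonormal_def by simp
      qed
    qed
  qed
  moreover have "\<forall>a<Suc r. \<forall>i<n. mv n A (u' a) i = lam' a * u' a i"
  proof (intro allI impI)
    fix a i assume a: "a < Suc r" and i: "i < n"
    show "mv n A (u' a) i = lam' a * u' a i"
    proof (cases "a = r")
      case True then show ?thesis using f(3) i unfolding u'_def lam'_def by simp
    next
      case False then have "a < r" using a by simp
      then show ?thesis using ev i False unfolding u'_def lam'_def by simp
    qed
  qed
  ultimately show ?case by blast
qed

theorem spectral:
  assumes "symm n A"
  shows "\<exists>u lam. orthonormal n n u \<and> (\<forall>a<n. \<forall>i<n. mv n A (u a) i = lam a * u a i)"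
  using spectral_aux[OF assms] by simp

locale gctx =
  fixes N :: nat and E :: "nat \<Rightarrow> nat \<Rightarrow> bool"
  assumes sg: "simple_graph N E" and cg: "connected_graph N E" and N2: "N \<ge> 2"
begin

definition d :: "nat \<Rightarrow> real" where "d v = real (deg N E v)"

lemma E_bounds: "E v w \<Longrightarrow> v < N \<and> w < N" using sg unfolding simple_graph_def by blast
lemma E_sym: "E v w \<Longrightarrow> E w v" using sg unfolding simple_graph_def by blast
lemma E_irrefl: "\<not> E v v" using sg unfolding simple_graph_def by blast

lemma sum_filter_N: "sum f {w \<in> {0..<N}. P w} = (\<Sum>w<N. if P w then f w else 0)"
proof -
  have e: "{w \<in> {0..<N}. P w} = {w\<in>{..<N}. P w}" by auto
  show ?thesis unfolding e by (rule sum.inter_filter) simp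
qed

lemma deg_sum: "d i = (\<Sum>w<N. if E i w then 1 else 0)"
proof -
  have "d i = (\<Sum>w\<in>{w \<in> {0..<N}. E i w}. 1)" unfolding d_def deg_def by simp
  also have "\<dots> = (\<Sum>w<N. if E i w then 1 else 0)" by (rule sum_filter_N)
  finally show ?thesis .
qed

lemma d_pos: assumes v: "v < N" shows "d v > 0"
proof -
  define w where "w = (if v = 0 then 1 else 0::nat)"
  have w: "w < N" "w \<noteq> v" using N2 unfolding w_def by auto
  have "E\<^sup>*\<^sup>* v w" using cg v w unfolding connected_graph_def by blast
  then obtain z where z: "E v z" using w(2) by (metis converse_rtranclpE)
  then have "z < N" using E_bounds by blast
  have "0 < (\<Sum>w\<in>{z}. if E v w then 1 else (0::real))" using z by simp
  also have "\<dots> \<le> (\<Sum>w<N. if E v w then 1 else 0)"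
    using \<open>z < N\<close> by (intro sum_mono2) auto
  finally show ?thesis unfolding deg_sum .
qed

lemma d_nonneg: "v < N \<Longrightarrow> d v \<ge> 0" using d_pos by (simp add: less_imp_le)

definition Sm :: "nat \<Rightarrow> nat \<Rightarrow> real" where
  "Sm i j = (if E i j then 1 / sqrt (d i * d j) else 0)"

lemma symm_Sm: "symm N Sm"
  unfolding symm_def Sm_def using E_sym by (auto simp: mult.commute)

lemma lap_sum: "laplacian_apply N E x v = (\<Sum>w<N. if E v w then x v - x w else 0)"
proof -
  have "laplacian_apply N E x v = d v * x v - (\<Sum>w<N. if E v w then x w else 0)"
    unfolding laplacian_apply_def d_def sum_filter_N ..
  also have "d v * x v = (\<Sum>w<N. if E v w then x v else 0)"
    unfolding deg_sum sum_distrib_right by (intro sum.cong) auto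
  finally show ?thesis by (simp add: sum_subtractf[symmetric] if_distrib cong: if_cong)
qed

lemma lap_quad: "(\<Sum>v<N. x v * laplacian_apply N E x v) =
    (1/2) * (\<Sum>v<N. \<Sum>w<N. if E v w then (x v - x w)\<^sup>2 else 0)"
proof -
  define T1 where "T1 = (\<Sum>v<N. \<Sum>w<N. if E v w then (x v)\<^sup>2 - x v * x w else 0)"
  define T2 where "T2 = (\<Sum>v<N. \<Sum>w<N. if E v w then (x w)\<^sup>2 - x v * x w else 0)"
  have L: "(\<Sum>v<N. x v * laplacian_apply N E x v) = T1"
    unfolding T1_def lap_sum sum_distrib_left
    by (intro sum.cong refl) (auto simp: power2_eq_square algebra_simps)
  have "T2 = (\<Sum>w<N. \<Sum>v<N. if E v w then (x w)\<^sup>2 - x v * x w else 0)"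
    unfolding T2_def by (rule sum.swap)
  also have "\<dots> = T1" unfolding T1_def
    by (intro sum.cong refl) (auto simp: E_sym mult.commute)
  finally have T21: "T2 = T1" .
  have "(\<Sum>v<N. \<Sum>w<N. if E v w then (x v - x w)\<^sup>2 else 0) = T1 + T2"
    unfolding T1_def T2_def sum.distrib[symmetric]
    by (intro sum.cong refl) (auto simp: power2_eq_square algebra_simps)
  then show ?thesis using L T21 by simp
qed

lemma lap_quad_nonneg: "(\<Sum>v<N. x v * laplacian_apply N E x v) \<ge> 0"
  unfolding lap_quad by (intro mult_nonneg_nonneg sum_nonneg) auto

lemma lap_zero_const:
  assumes z: "\<forall>v<N. laplacian_apply N E x v = 0" and v: "v < N" and w: "w < N"
  shows "x v = x w"
proof -
  have "(\<Sum>v<N. \<Sum>w<N. if E v w then (x v - x w)\<^sup>2 else 0) = 0"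
    using lap_quad[of x] z by simp
  then have "\<forall>v<N. (\<Sum>w<N. if E v w then (x v - x w)\<^sup>2 else 0) = 0"
    by (subst (asm) sum_nonneg_eq_0_iff) (auto intro: sum_nonneg)
  then have all: "\<forall>v<N. \<forall>w<N. (if E v w then (x v - x w)\<^sup>2 else 0) = 0"
    by (auto simp: sum_nonneg_eq_0_iff)
  have edge: "x a = x b" if "E a b" for a b
  proof -
    have ab: "a < N" "b < N" using E_bounds that by auto
    have "(if E a b then (x a - x b)\<^sup>2 else 0) = 0" using all ab by blast
    then show ?thesis using that by simp
  qed
  have "E\<^sup>*\<^sup>* v w" using cg v w unfolding connected_graph_def by blast
  then show ?thesis by (induction rule: rtranclp_induct) (auto dest: edge)
qed

lemma lap_S:
  assumes v: "v < N"
  shows "laplacian_apply N E (\<lambda>w. f w / sqrt (d w)) v = sqrt (d v) * (f v - mv N Sm f v)"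
proof -
  have dv: "d v > 0" using d_pos[OF v] .
  have "laplacian_apply N E (\<lambda>w. f w / sqrt (d w)) v
      = (\<Sum>w<N. if E v w then f v / sqrt (d v) - f w / sqrt (d w) else 0)" by (rule lap_sum)
  also have "\<dots> = (\<Sum>w<N. if E v w then f v / sqrt (d v) else 0) - (\<Sum>w<N. if E v w then f w / sqrt (d w) else 0)"
    by (simp add: sum_subtractf[symmetric] if_distrib cong: if_cong)
  also have "(\<Sum>w<N. if E v w then f v / sqrt (d v) else 0) = d v * (f v / sqrt (d v))"
    unfolding deg_sum sum_distrib_right by (intro sum.cong) auto
  also have "d v * (f v / sqrt (d v)) = sqrt (d v) * f v"
    using dv by (simp add: field_simps real_div_sqrt)
  also have "(\<Sum>w<N. if E v w then f w / sqrt (d w) else 0) = sqrt (d v) * mv N Sm f v"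
    unfolding mv_def Sm_def sum_distrib_left
    using dv by (intro sum.cong refl) (auto simp: real_sqrt_mult field_simps)
  finally show ?thesis by (simp add: algebra_simps)
qed

end

locale sctx = gctx +
  fixes u :: "nat \<Rightarrow> nat \<Rightarrow> real" and lam :: "nat \<Rightarrow> real"
  assumes bp: "bipartite_graph N E"
    and onb: "orthonormal N N u"
    and eig: "\<forall>a<N. \<forall>i<N. mv N Sm (u a) i = lam a * u a i"
begin

lemma onb': "a < N \<Longrightarrow> b < N \<Longrightarrow> ip N (u a) (u b) = (if a = b then 1 else 0)"
  using onb unfolding orthonormal_def by blast

lemma eig': "a < N \<Longrightarrow> i < N \<Longrightarrow> mv N Sm (u a) i = lam a * u a i"
  using eig by blast

lemma compl: "i < N \<Longrightarrow> j < N \<Longrightarrow> (\<Sum>k<N. u k i * u k j) = (if i = j then 1 else 0)"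
  using complete[OF onb] by blast

lemma expand:
  assumes v: "v < N"
  shows "f v = (\<Sum>k<N. ip N (u k) f * u k v)"
proof -
  have "(\<Sum>k<N. ip N (u k) f * u k v) = (\<Sum>k<N. \<Sum>j<N. u k j * f j * u k v)"
    unfolding ip_def sum_distrib_right ..
  also have "\<dots> = (\<Sum>j<N. \<Sum>k<N. u k j * f j * u k v)" by (rule sum.swap)
  also have "\<dots> = (\<Sum>j<N. f j * (\<Sum>k<N. u k j * u k v))"
    by (simp add: sum_distrib_left algebra_simps)
  also have "\<dots> = (\<Sum>j<N. f j * (if j = v then 1 else 0))"
    by (intro sum.cong refl) (simp add: compl v)
  also have "\<dots> = f v" using v by (simp add: if_distrib cong: if_cong)
  finally show ?thesis by simp
qed

lemma spec_exp:
  assumes i: "i < N" and j: "j < N"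
  shows "Sm i j = (\<Sum>k<N. lam k * u k i * u k j)"
proof -
  have "Sm i j = (\<Sum>k<N. ip N (u k) (Sm i) * u k j)" by (rule expand[OF j])
  also have "\<dots> = (\<Sum>k<N. lam k * u k i * u k j)"
  proof (intro sum.cong refl)
    fix k assume k: "k \<in> {..<N}"
    have "ip N (u k) (Sm i) = mv N Sm (u k) i" unfolding ip_def mv_def by (simp add: mult.commute)
    also have "\<dots> = lam k * u k i" using eig' k i by simp
    finally show "ip N (u k) (Sm i) * u k j = lam k * u k i * u k j" by simp
  qed
  finally show ?thesis .
qed

lemma eig_le1:
  assumes f1: "ip N f f = 1" and ev: "\<forall>v<N. mv N Sm f v = c * f v"
  shows "c \<le> 1"
proof -
  define a where "a w = f w / sqrt (d w)" for w
  have "(\<Sum>v<N. a v * laplacian_apply N E a v) = (\<Sum>v<N. (1 - c) * (f v * f v))"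
  proof (intro sum.cong refl)
    fix v assume v: "v \<in> {..<N}"
    then have dv: "d v > 0" using d_pos by simp
    have L: "laplacian_apply N E a v = sqrt (d v) * ((1 - c) * f v)"
      unfolding a_def using lap_S[of v f] v ev by (simp add: algebra_simps)
    have "a v * laplacian_apply N E a v = (f v / sqrt (d v) * sqrt (d v)) * ((1 - c) * f v)"
      unfolding L a_def by (simp only: mult.assoc)
    also have "f v / sqrt (d v) * sqrt (d v) = f v" using dv by simp
    finally show "a v * laplacian_apply N E a v = (1 - c) * (f v * f v)" by (simp add: algebra_simps)
  qed
  also have "\<dots> = 1 - c" using f1 unfolding ip_def by (simp add: sum_distrib_left[symmetric])
  finally show ?thesis using lap_quad_nonneg[of a] by simp
qed

definition Sset where "Sset = (SOME S. S \<subseteq> {0..<N} \<and> (\<forall>u v. E u v \<longrightarrow> (u \<in> S \<longleftrightarrow> v \<notin> S)))"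
definition sg :: "nat \<Rightarrow> real" where "sg v = (if v \<in> Sset then 1 else -1)"

lemma Sset_prop: "E v w \<Longrightarrow> (v \<in> Sset \<longleftrightarrow> w \<notin> Sset)"
proof -
  have "\<exists>S. S \<subseteq> {0..<N} \<and> (\<forall>u v. E u v \<longrightarrow> (u \<in> S \<longleftrightarrow> v \<notin> S))"
    using bp unfolding bipartite_graph_def .
  then have "Sset \<subseteq> {0..<N} \<and> (\<forall>u v. E u v \<longrightarrow> (u \<in> Sset \<longleftrightarrow> v \<notin> Sset))"
    unfolding Sset_def by (rule someI_ex)
  then show "E v w \<Longrightarrow> (v \<in> Sset \<longleftrightarrow> w \<notin> Sset)" by blast
qed

lemma sg_edge: "E v w \<Longrightarrow> sg w = - sg v"
  using Sset_prop[of v w] unfolding sg_def by auto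
lemma sg_sq: "sg v * sg v = 1" unfolding sg_def by auto
lemma sg_sq2: "sg v * x * (sg v * y) = x * y" unfolding sg_def by auto
lemma sg_sq3: "c * sg v * x * (c' * sg v * y) = c * x * (c' * y)" unfolding sg_def by auto

lemma flip: "mv N Sm (\<lambda>w. sg w * f w) v = - sg v * mv N Sm f v"
  unfolding mv_def sum_distrib_left
proof (intro sum.cong refl)
  fix w assume "w \<in> {..<N}"
  show "Sm v w * (sg w * f w) = - sg v * (Sm v w * f w)"
  proof (cases "E v w")
    case True
    then have "sg w = - sg v" by (rule sg_edge)
    then show ?thesis by simp
  qed (simp add: Sm_def)
qed

lemma eig_ge_m1:
  assumes f1: "ip N f f = 1" and ev: "\<forall>v<N. mv N Sm f v = c * f v"
  shows "c \<ge> -1"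
proof -
  define g where "g w = sg w * f w" for w
  have "ip N g g = ip N f f" unfolding g_def ip_def
    by (intro sum.cong refl) (rule sg_sq2)
  then have g1: "ip N g g = 1" using f1 by simp
  have gev: "\<forall>v<N. mv N Sm g v = (- c) * g v"
    unfolding g_def flip using ev by simp
  have "- c \<le> 1" by (rule eig_le1[OF g1 gev])
  then show ?thesis by simp
qed

lemma lam_bounds: assumes k: "k < N" shows "-1 \<le> lam k" "lam k \<le> 1"
proof -
  have "ip N (u k) (u k) = 1" using onb' k by simp
  moreover have "\<forall>v<N. mv N Sm (u k) v = lam k * u k v" using eig' k by simp
  ultimately show "-1 \<le> lam k" "lam k \<le> 1" using eig_le1 eig_ge_m1 by auto
qed

lemma eig1_form:
  assumes ev: "\<forall>v<N. mv N Sm f v = f v"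
  shows "\<exists>c. \<forall>v<N. f v = c * sqrt (d v)"
proof -
  define a where "a w = f w / sqrt (d w)" for w
  have z: "\<forall>v<N. laplacian_apply N E a v = 0"
  proof (intro allI impI)
    fix v assume v: "v < N"
    show "laplacian_apply N E a v = 0" unfolding a_def lap_S[OF v] using ev v by simp
  qed
  have const: "a v = a 0" if "v < N" for v
    using lap_zero_const[OF z that, of 0] N2 by simp
  show ?thesis
  proof (intro exI allI impI)
    fix v assume v: "v < N"
    have "d v > 0" using d_pos v by simp
    then have "f v = a v * sqrt (d v)" unfolding a_def by simp
    then show "f v = a 0 * sqrt (d v)" using const[OF v] by simp
  qed
qed

lemma eigm1_form:
  assumes ev: "\<forall>v<N. mv N Sm f v = - f v"
  shows "\<exists>c. \<forall>v<N. f v = c * sg v * sqrt (d v)"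
proof -
  define g where "g w = sg w * f w" for w
  have "\<forall>v<N. mv N Sm g v = g v" unfolding g_def flip using ev by simp
  then obtain c where c: "\<forall>v<N. g v = c * sqrt (d v)" using eig1_form by blast
  show ?thesis
  proof (intro exI allI impI)
    fix v assume v: "v < N"
    have "f v = sg v * g v" unfolding g_def using sg_sq[of v] by (simp add: mult.assoc[symmetric])
    then show "f v = c * sg v * sqrt (d v)" using c v by simp
  qed
qed

definition M :: real where "M = (\<Sum>v<N. d v)"

lemma M_pos: "M > 0"
proof -
  have "0 < d 0" using d_pos N2 by simp
  also have "\<dots> \<le> M" unfolding M_def using N2 d_nonneg by (intro member_le_sum) auto
  finally show ?thesis .
qed

definition sq1 :: "nat \<Rightarrow> real" where "sq1 v = sqrt (d v)"
definition sqm :: "nat \<Rightarrow> real" where "sqm v = sg v * sqrt (d v)"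

lemma mv_sq1: assumes v: "v < N" shows "mv N Sm sq1 v = sq1 v"
proof -
  have dv: "d v > 0" using d_pos v by simp
  have "mv N Sm sq1 v = (\<Sum>w<N. if E v w then 1 / sqrt (d v) else 0)"
    unfolding mv_def Sm_def sq1_def
  proof (intro sum.cong refl)
    fix w assume w: "w \<in> {..<N}"
    show "(if E v w then 1 / sqrt (d v * d w) else 0) * sqrt (d w) = (if E v w then 1 / sqrt (d v) else 0)"
    proof (cases "E v w")
      case True
      then have "d w > 0" using d_pos E_bounds by blast
      then show ?thesis using True dv by (simp add: real_sqrt_mult)
    qed simp
  qed
  also have "\<dots> = d v * (1 / sqrt (d v))" unfolding deg_sum sum_distrib_right by (intro sum.cong) auto
  also have "\<dots> = sq1 v" unfolding sq1_def using dv by (simp add: real_div_sqrt)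
  finally show ?thesis .
qed

lemma mv_sqm: assumes v: "v < N" shows "mv N Sm sqm v = - sqm v"
  using flip[of sq1 v] mv_sq1[OF v] unfolding sqm_def sq1_def by simp

lemma orth1: assumes k: "k < N" shows "(1 - lam k) * ip N (u k) sq1 = 0"
proof -
  have "ip N (u k) sq1 = ip N (u k) (mv N Sm sq1)" by (intro ip_cong) (auto simp: mv_sq1)
  also have "\<dots> = ip N (mv N Sm (u k)) sq1" by (rule mv_sym[OF symm_Sm])
  also have "\<dots> = ip N (\<lambda>i. lam k * u k i) sq1" by (intro ip_cong) (auto simp: eig' k)
  also have "\<dots> = lam k * ip N (u k) sq1" by (rule ip_scale_left)
  finally show ?thesis by (simp add: algebra_simps)
qed

lemma orthm: assumes k: "k < N" shows "(1 + lam k) * ip N (u k) sqm = 0"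
proof -
  have A: "ip N (u k) (mv N Sm sqm) = - ip N (u k) sqm"
  proof -
    have "ip N (u k) (mv N Sm sqm) = ip N (u k) (\<lambda>i. (-1) * sqm i)" by (intro ip_cong) (auto simp: mv_sqm)
    also have "\<dots> = (-1) * ip N (u k) sqm" by (rule ip_scale_right)
    finally show ?thesis by simp
  qed
  have B: "ip N (u k) (mv N Sm sqm) = lam k * ip N (u k) sqm"
  proof -
    have "ip N (u k) (mv N Sm sqm) = ip N (mv N Sm (u k)) sqm" by (rule mv_sym[OF symm_Sm])
    also have "\<dots> = ip N (\<lambda>i. lam k * u k i) sqm" by (intro ip_cong) (auto simp: eig' k)
    also have "\<dots> = lam k * ip N (u k) sqm" by (rule ip_scale_left)
    finally show ?thesis .
  qed
  from A B show ?thesis by (simp add: algebra_simps)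
qed

lemma exists_k1: "\<exists>k<N. lam k = 1"
proof (rule ccontr)
  assume "\<not> ?thesis"
  then have "\<forall>k<N. ip N (u k) sq1 = 0" using orth1 by force
  then have "sq1 0 = 0" using expand[of 0 sq1] N2 by simp
  moreover have "sq1 0 > 0" unfolding sq1_def using d_pos N2 by simp
  ultimately show False by simp
qed

lemma exists_kN: "\<exists>k<N. lam k = -1"
proof (rule ccontr)
  assume "\<not> ?thesis"
  then have "\<forall>k<N. ip N (u k) sqm = 0" using orthm by (metis add_eq_0_iff mult_eq_0_iff)
  then have "sqm 0 = 0" using expand[of 0 sqm] N2 by simp
  moreover have "sqm 0 \<noteq> 0" unfolding sqm_def sg_def using d_pos[of 0] N2 by simp
  ultimately show False by simp
qed

lemma ip_sqrt_d: "ip N (\<lambda>v. c * sqrt (d v)) (\<lambda>v. c' * sqrt (d v)) = c * c' * M"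
  unfolding ip_def M_def sum_distrib_left
  by (intro sum.cong refl) (auto simp: d_nonneg algebra_simps)

lemma ip_sg_sqrt_d: "ip N (\<lambda>v. c * sg v * sqrt (d v)) (\<lambda>v. c' * sg v * sqrt (d v)) = c * c' * M"
proof -
  have "ip N (\<lambda>v. c * sg v * sqrt (d v)) (\<lambda>v. c' * sg v * sqrt (d v))
      = ip N (\<lambda>v. c * sqrt (d v)) (\<lambda>v. c' * sqrt (d v))"
    unfolding ip_def by (intro sum.cong refl) (rule sg_sq3)
  then show ?thesis using ip_sqrt_d by simp
qed

lemma k1_form:
  assumes k: "k < N" and l1: "lam k = 1"
  shows "\<exists>c. (\<forall>v<N. u k v = c * sqrt (d v)) \<and> c * c * M = 1"
proof -
  obtain c where c: "\<forall>v<N. u k v = c * sqrt (d v)" using eig1_form eig' k l1 by force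
  have "1 = ip N (u k) (u k)" using onb' k by simp
  also have "\<dots> = ip N (\<lambda>v. c * sqrt (d v)) (\<lambda>v. c * sqrt (d v))" using c by (intro ip_cong) auto
  finally show ?thesis using c ip_sqrt_d by auto
qed

lemma kN_form:
  assumes k: "k < N" and l1: "lam k = -1"
  shows "\<exists>c. (\<forall>v<N. u k v = c * sg v * sqrt (d v)) \<and> c * c * M = 1"
proof -
  obtain c where c: "\<forall>v<N. u k v = c * sg v * sqrt (d v)" using eigm1_form eig' k l1 by force
  have "1 = ip N (u k) (u k)" using onb' k by simp
  also have "\<dots> = ip N (\<lambda>v. c * sg v * sqrt (d v)) (\<lambda>v. c * sg v * sqrt (d v))" using c by (intro ip_cong) auto
  finally show ?thesis using c ip_sg_sqrt_d by auto
qed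

lemma unique_k1:
  assumes k: "k < N" "lam k = 1" and k': "k' < N" "lam k' = 1"
  shows "k = k'"
proof (rule ccontr)
  assume ne: "k \<noteq> k'"
  obtain c where c: "\<forall>v<N. u k v = c * sqrt (d v)" "c * c * M = 1" using k1_form k by blast
  obtain c' where c': "\<forall>v<N. u k' v = c' * sqrt (d v)" "c' * c' * M = 1" using k1_form k' by blast
  have "0 = ip N (u k) (u k')" using onb' k k' ne by simp
  also have "\<dots> = ip N (\<lambda>v. c * sqrt (d v)) (\<lambda>v. c' * sqrt (d v))" using c c' by (intro ip_cong) auto
  also have "\<dots> = c * c' * M" by (rule ip_sqrt_d)
  finally have "c * c' * M = 0" by simp
  then have "c = 0 \<or> c' = 0" using M_pos by simp
  then show False using c(2) c'(2) by auto
qed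

lemma k1_sq: assumes k: "k < N" "lam k = 1" and v: "v < N" shows "(u k v)\<^sup>2 = d v / M"
proof -
  obtain c where c: "\<forall>v<N. u k v = c * sqrt (d v)" "c * c * M = 1" using k1_form k by blast
  have "(u k v)\<^sup>2 = c * c * d v" using c v d_nonneg[OF v] by (simp add: power2_eq_square algebra_simps)
  also have "c * c = 1 / M" using c(2) M_pos by (simp add: field_simps)
  finally show ?thesis by simp
qed

lemma kN_sq: assumes k: "k < N" "lam k = -1" and v: "v < N" shows "(u k v)\<^sup>2 = d v / M"
proof -
  obtain c where c: "\<forall>v<N. u k v = c * sg v * sqrt (d v)" "c * c * M = 1" using kN_form k by blast
  have "(u k v)\<^sup>2 = c * c * (sg v * sg v) * d v" using c v d_nonneg[OF v] by (simp add: power2_eq_square algebra_simps)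
  also have "c * c = 1 / M" using c(2) M_pos by (simp add: field_simps)
  finally show ?thesis using sg_sq by simp
qed

lemma k1_const: assumes k: "k < N" "lam k = 1" and i: "i < N" and j: "j < N"
  shows "u k i / sqrt (d i) = u k j / sqrt (d j)"
proof -
  obtain c where c: "\<forall>v<N. u k v = c * sqrt (d v)" using k1_form k by blast
  then show ?thesis using i j d_pos[OF i] d_pos[OF j] by simp
qed

lemma trace0: "(\<Sum>k<N. lam k) = 0"
proof -
  have "(\<Sum>k<N. lam k) = (\<Sum>k<N. ip N (u k) (mv N Sm (u k)))"
  proof (intro sum.cong refl)
    fix k assume k: "k \<in> {..<N}"
    have "ip N (u k) (mv N Sm (u k)) = ip N (u k) (\<lambda>i. lam k * u k i)" using k by (intro ip_cong) (auto simp: eig')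
    also have "\<dots> = lam k" using onb' k by (simp add: ip_scale_right)
    finally show "lam k = ip N (u k) (mv N Sm (u k))" by simp
  qed
  also have "\<dots> = (\<Sum>k<N. \<Sum>i<N. \<Sum>j<N. Sm i j * (u k i * u k j))"
  proof (intro sum.cong refl)
    fix k
    show "ip N (u k) (mv N Sm (u k)) = (\<Sum>i<N. \<Sum>j<N. Sm i j * (u k i * u k j))"
      unfolding ip_def mv_def sum_distrib_left by (simp add: ac_simps)
  qed
  also have "\<dots> = (\<Sum>i<N. \<Sum>k<N. \<Sum>j<N. Sm i j * (u k i * u k j))" by (rule sum.swap)
  also have "\<dots> = (\<Sum>i<N. \<Sum>j<N. \<Sum>k<N. Sm i j * (u k i * u k j))" by (rule sum.cong[OF refl], rule sum.swap)
  also have "\<dots> = (\<Sum>i<N. \<Sum>j<N. Sm i j * (if i = j then 1 else 0))"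
    by (intro sum.cong refl) (simp add: sum_distrib_left[symmetric] compl)
  also have "\<dots> = (\<Sum>i<N. Sm i i)" by (intro sum.cong refl) (simp add: if_distrib cong: if_cong)
  also have "\<dots> = 0" by (simp add: Sm_def E_irrefl)
  finally show ?thesis .
qed

end

lemma half_sum:
  fixes g :: "nat \<Rightarrow> nat \<Rightarrow> real"
  assumes sym: "\<And>i j. g i j = g j i" and diag: "\<And>i. g i i = 0"
  shows "2 * (\<Sum>j<n. \<Sum>i<j. g i j) = (\<Sum>i<n. \<Sum>j<n. g i j)"
proof (induction n)
  case 0 then show ?case by simp
next
  case (Suc n)
  have "(\<Sum>i<Suc n. \<Sum>j<Suc n. g i j) = (\<Sum>i<Suc n. (\<Sum>j<n. g i j) + g i n)" by simp
  also have "\<dots> = (\<Sum>i<Suc n. \<Sum>j<n. g i j) + (\<Sum>i<Suc n. g i n)" by (rule sum.distrib)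
  also have "(\<Sum>i<Suc n. \<Sum>j<n. g i j) = (\<Sum>i<n. \<Sum>j<n. g i j) + (\<Sum>j<n. g n j)" by simp
  also have "(\<Sum>j<n. g n j) = (\<Sum>j<n. g j n)" using sym by simp
  also have "(\<Sum>i<Suc n. g i n) = (\<Sum>i<n. g i n)" using diag by simp
  finally have "(\<Sum>i<Suc n. \<Sum>j<Suc n. g i j) = (\<Sum>i<n. \<Sum>j<n. g i j) + 2 * (\<Sum>i<n. g i n)" by simp
  then show ?case using Suc.IH by (simp add: algebra_simps)
qed

lemma lin_sum3:
  fixes X Y D :: "nat \<Rightarrow> real"
  shows "(\<Sum>i<n. c * X i - 2 * Y i * S + D i * T) = c * (\<Sum>i<n. X i) - 2 * (\<Sum>i<n. Y i) * S + (\<Sum>i<n. D i) * T"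
  by (simp add: sum.distrib sum_subtractf sum_distrib_left sum_distrib_right mult.assoc)

lemma double_sq_sum:
  fixes D A :: "nat \<Rightarrow> real"
  shows "(\<Sum>i<n. \<Sum>j<n. D i * (A i - A j)\<^sup>2) =
     real n * (\<Sum>i<n. D i * (A i)\<^sup>2) - 2 * (\<Sum>i<n. D i * A i) * (\<Sum>j<n. A j) + (\<Sum>i<n. D i) * (\<Sum>j<n. (A j)\<^sup>2)"
proof -
  have "(\<Sum>i<n. \<Sum>j<n. D i * (A i - A j)\<^sup>2) =
      (\<Sum>i<n. \<Sum>j<n. D i * (A i)\<^sup>2 - 2 * (D i * A i) * A j + D i * (A j)\<^sup>2)"
    by (intro sum.cong refl) (simp add: power2_diff algebra_simps)
  also have "\<dots> = (\<Sum>i<n. real n * (D i * (A i)\<^sup>2) - 2 * (D i * A i) * (\<Sum>j<n. A j) + D i * (\<Sum>j<n. (A j)\<^sup>2))"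
    by (intro sum.cong refl) (simp add: sum.distrib sum_subtractf sum_distrib_left)
  also have "\<dots> = real n * (\<Sum>i<n. D i * (A i)\<^sup>2) - 2 * (\<Sum>i<n. D i * A i) * (\<Sum>j<n. A j) + (\<Sum>i<n. D i) * (\<Sum>j<n. (A j)\<^sup>2)"
    by (rule lin_sum3)
  finally show ?thesis .
qed

context sctx
begin

definition a :: "nat \<Rightarrow> nat \<Rightarrow> real" where "a k v = u k v / sqrt (d v)"
definition K :: "nat set" where "K = {k. k < N \<and> lam k \<noteq> 1}"
definition Rf :: "nat \<Rightarrow> nat \<Rightarrow> real" where
  "Rf i j = (\<Sum>k\<in>K. (a k i - a k j)\<^sup>2 / (1 - lam k))"

lemma K_sub: "K \<subseteq> {..<N}" unfolding K_def by auto
lemma finite_K: "finite K" using K_sub finite_subset by blast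

lemma lap_a: assumes k: "k < N" and v: "v < N"
  shows "laplacian_apply N E (a k) v = sqrt (d v) * ((1 - lam k) * u k v)"
proof -
  have "laplacian_apply N E (a k) v = sqrt (d v) * (u k v - mv N Sm (u k) v)"
    unfolding a_def by (rule lap_S[OF v])
  also have "\<dots> = sqrt (d v) * ((1 - lam k) * u k v)" using eig'[OF k v] by (simp add: algebra_simps)
  finally show ?thesis .
qed

lemma lap_lin:
  assumes "finite I"
  shows "laplacian_apply N E (\<lambda>v. \<Sum>k\<in>I. c k * g k v) w = (\<Sum>k\<in>I. c k * laplacian_apply N E (g k) w)"
proof -
  have "laplacian_apply N E (\<lambda>v. \<Sum>k\<in>I. c k * g k v) w
      = (\<Sum>x<N. \<Sum>k\<in>I. c k * (if E w x then g k w - g k x else 0))"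
    unfolding lap_sum
  proof (intro sum.cong refl)
    fix x
    show "(if E w x then (\<Sum>k\<in>I. c k * g k w) - (\<Sum>k\<in>I. c k * g k x) else 0)
        = (\<Sum>k\<in>I. c k * (if E w x then g k w - g k x else 0))"
      by (cases "E w x") (simp_all add: sum_subtractf[symmetric] right_diff_distrib)
  qed
  also have "\<dots> = (\<Sum>k\<in>I. \<Sum>x<N. c k * (if E w x then g k w - g k x else 0))" by (rule sum.swap)
  also have "\<dots> = (\<Sum>k\<in>I. c k * laplacian_apply N E (g k) w)"
    unfolding lap_sum sum_distrib_left ..
  finally show ?thesis .
qed

lemma lap_diff: "laplacian_apply N E (\<lambda>v. x v - y v) w = laplacian_apply N E x w - laplacian_apply N E y w"
  unfolding lap_sum by (simp add: sum_subtractf[symmetric] if_distrib algebra_simps cong: if_cong)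

lemma sum_K_ext:
  assumes i: "i < N" and j: "j < N"
  shows "(\<Sum>k\<in>K. (a k i - a k j) * f k) = (\<Sum>k<N. (a k i - a k j) * f k)"
proof (rule sum.mono_neutral_left)
  show "\<forall>k\<in>{..<N} - K. (a k i - a k j) * f k = 0"
  proof
    fix k assume "k \<in> {..<N} - K"
    then have k: "k < N" "lam k = 1" unfolding K_def by auto
    have "a k i = a k j" unfolding a_def by (rule k1_const[OF k i j])
    then show "(a k i - a k j) * f k = 0" by simp
  qed
qed (use K_sub in auto)

lemma resist:
  assumes i: "i < N" and j: "j < N"
  shows "eff_resistance N E i j = Rf i j"
proof -
  define c where "c k = (a k i - a k j) / (1 - lam k)" for k
  define x where "x v = (\<Sum>k\<in>K. c k * a k v)" for v
  have Lx: "laplacian_apply N E x v = (if v = i then 1 else 0) - (if v = j then 1 else 0)" if v: "v < N" for v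
  proof -
    have "laplacian_apply N E x v = (\<Sum>k\<in>K. c k * laplacian_apply N E (a k) v)"
      unfolding x_def by (rule lap_lin[OF finite_K])
    also have "\<dots> = (\<Sum>k\<in>K. c k * (sqrt (d v) * ((1 - lam k) * u k v)))"
      using K_sub v by (intro sum.cong refl) (auto simp: lap_a)
    also have "\<dots> = sqrt (d v) * (\<Sum>k\<in>K. (a k i - a k j) * u k v)"
      unfolding sum_distrib_left
      by (intro sum.cong refl) (auto simp: c_def K_def)
    also have "(\<Sum>k\<in>K. (a k i - a k j) * u k v) = (\<Sum>k<N. (a k i - a k j) * u k v)"
      by (rule sum_K_ext[OF i j])
    also have "\<dots> = (\<Sum>k<N. u k i * u k v) / sqrt (d i) - (\<Sum>k<N. u k j * u k v) / sqrt (d j)"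
      unfolding a_def by (simp add: sum_subtractf sum_divide_distrib algebra_simps)
    also have "\<dots> = (if i = v then 1 else 0) / sqrt (d i) - (if j = v then 1 else 0) / sqrt (d j)"
      using compl i j v by simp
    finally show ?thesis using d_pos[OF v] by auto
  qed
  have xdiff: "x i - x j = Rf i j"
  proof -
    have "x i - x j = (\<Sum>k\<in>K. c k * (a k i - a k j))"
      unfolding x_def by (simp add: sum_subtractf[symmetric] algebra_simps)
    also have "\<dots> = Rf i j" unfolding Rf_def c_def
      by (intro sum.cong refl) (simp add: power2_eq_square)
    finally show ?thesis .
  qed
  have "eff_resistance N E i j = x i - x j"
    unfolding eff_resistance_def
  proof (rule the_equality)
    show "\<exists>y. (\<forall>v<N. laplacian_apply N E y v = (if v = i then 1 else 0) - (if v = j then 1 else 0)) \<and> x i - x j = y i - y j"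
      using Lx by blast
  next
    fix r assume "\<exists>y. (\<forall>v<N. laplacian_apply N E y v = (if v = i then 1 else 0) - (if v = j then 1 else 0)) \<and> r = y i - y j"
    then obtain y where y: "\<forall>v<N. laplacian_apply N E y v = (if v = i then 1 else 0) - (if v = j then 1 else 0)"
      and r: "r = y i - y j" by blast
    have z: "\<forall>v<N. laplacian_apply N E (\<lambda>v. y v - x v) v = 0"
      using y Lx by (simp add: lap_diff)
    have "y i - x i = y j - x j"
      using lap_zero_const[OF z i j] by simp
    then show "r = x i - x j" using r by simp
  qed
  then show ?thesis using xdiff by simp
qed

lemma Rf_sym: "Rf i j = Rf j i"
  unfolding Rf_def by (intro sum.cong refl) (simp add: power2_commute)
lemma Rf_diag: "Rf i i = 0"
  unfolding Rf_def by simp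

definition w :: "nat \<Rightarrow> real" where "w k = (\<Sum>j<N. (u k j)\<^sup>2 / d j)"

lemma kirchhoff_formula:
  "add_deg_kirchhoff N E = (\<Sum>k\<in>K. (real N + M * w k) / (1 - lam k))"
proof -
  have "add_deg_kirchhoff N E = (\<Sum>j<N. \<Sum>i<j. (d i + d j) * Rf i j)"
    unfolding add_deg_kirchhoff_def
  proof (intro sum.cong refl)
    fix j i assume j: "j \<in> {..<N}" and i: "i \<in> {..<j}"
    then have "i < N" "j < N" by auto
    then show "real (deg N E i + deg N E j) * eff_resistance N E i j = (d i + d j) * Rf i j"
      by (simp add: resist d_def)
  qed
  also have "\<dots> = (1/2) * (\<Sum>i<N. \<Sum>j<N. (d i + d j) * Rf i j)"
    using half_sum[of "\<lambda>i j. (d i + d j) * Rf i j" N] Rf_sym Rf_diag by (simp add: algebra_simps)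
  also have "(\<Sum>i<N. \<Sum>j<N. (d i + d j) * Rf i j) = 2 * (\<Sum>i<N. \<Sum>j<N. d i * Rf i j)"
  proof -
    have "(\<Sum>i<N. \<Sum>j<N. d j * Rf i j) = (\<Sum>j<N. \<Sum>i<N. d j * Rf i j)" by (rule sum.swap)
    also have "\<dots> = (\<Sum>j<N. \<Sum>i<N. d j * Rf j i)" using Rf_sym by simp
    finally have "(\<Sum>i<N. \<Sum>j<N. d j * Rf i j) = (\<Sum>i<N. \<Sum>j<N. d i * Rf i j)" .
    then show ?thesis by (simp add: distrib_right sum.distrib)
  qed
  also have "(\<Sum>i<N. \<Sum>j<N. d i * Rf i j) = (\<Sum>k\<in>K. (\<Sum>i<N. \<Sum>j<N. d i * (a k i - a k j)\<^sup>2) / (1 - lam k))"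
  proof -
    have "(\<Sum>i<N. \<Sum>j<N. d i * Rf i j) = (\<Sum>i<N. \<Sum>j<N. \<Sum>k\<in>K. d i * (a k i - a k j)\<^sup>2 / (1 - lam k))"
      unfolding Rf_def sum_distrib_left by simp
    also have "\<dots> = (\<Sum>i<N. \<Sum>k\<in>K. \<Sum>j<N. d i * (a k i - a k j)\<^sup>2 / (1 - lam k))"
      by (rule sum.cong[OF refl], rule sum.swap)
    also have "\<dots> = (\<Sum>k\<in>K. \<Sum>i<N. \<Sum>j<N. d i * (a k i - a k j)\<^sup>2 / (1 - lam k))"
      by (rule sum.swap)
    also have "\<dots> = (\<Sum>k\<in>K. (\<Sum>i<N. \<Sum>j<N. d i * (a k i - a k j)\<^sup>2) / (1 - lam k))"
      by (simp add: sum_divide_distrib)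
    finally show ?thesis .
  qed
  also have "\<dots> = (\<Sum>k\<in>K. (real N + M * w k) / (1 - lam k))"
  proof (intro sum.cong refl)
    fix k assume kK: "k \<in> K"
    then have k: "k < N" and lk: "lam k \<noteq> 1" unfolding K_def by auto
    have s1: "(\<Sum>i<N. d i * (a k i)\<^sup>2) = 1"
    proof -
      have "(\<Sum>i<N. d i * (a k i)\<^sup>2) = (\<Sum>i<N. u k i * u k i)"
      proof (intro sum.cong refl)
        fix i assume "i \<in> {..<N}"
        then have di: "d i > 0" using d_pos by simp
        have "d i * (a k i)\<^sup>2 = d i * (u k i)\<^sup>2 / (sqrt (d i))\<^sup>2" unfolding a_def by (simp add: power_divide)
        also have "(sqrt (d i))\<^sup>2 = d i" using di by simp
        finally show "d i * (a k i)\<^sup>2 = u k i * u k i" using di by (simp add: power2_eq_square)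
      qed
      also have "\<dots> = 1" using onb'[OF k k] unfolding ip_def by simp
      finally show ?thesis .
    qed
    have s2: "(\<Sum>i<N. d i * a k i) = 0"
    proof -
      have "(\<Sum>i<N. d i * a k i) = ip N (u k) sq1"
        unfolding a_def ip_def sq1_def
      proof (intro sum.cong refl)
        fix i assume "i \<in> {..<N}"
        then have di: "d i \<ge> 0" using d_nonneg by simp
        have "d i * (u k i / sqrt (d i)) = u k i * (d i / sqrt (d i))" by simp
        also have "d i / sqrt (d i) = sqrt (d i)" using di by (rule real_div_sqrt)
        finally show "d i * (u k i / sqrt (d i)) = u k i * sqrt (d i)" .
      qed
      also have "\<dots> = 0" using orth1[OF k] lk by simp
      finally show ?thesis .
    qed
    have s3: "(\<Sum>j<N. (a k j)\<^sup>2) = w k"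
      unfolding a_def w_def by (intro sum.cong refl) (simp add: power2_eq_square d_nonneg)
    show "(\<Sum>i<N. \<Sum>j<N. d i * (a k i - a k j)\<^sup>2) / (1 - lam k) = (real N + M * w k) / (1 - lam k)"
      unfolding double_sq_sum s1 s2 s3 M_def by simp
  qed
  finally show ?thesis by simp
qed

end

lemma two_point:
  fixes p q lo hi :: real
  assumes "lo \<le> p" "p \<le> hi" "lo \<le> q" "q \<le> hi" "hi < 1" "p + q = lo + hi"
  shows "1 / (1 - p) + 1 / (1 - q) \<le> 1 / (1 - lo) + 1 / (1 - hi)"
proof -
  define A where "A = 1 - hi"
  define B where "B = 1 - lo"
  define P where "P = 1 - p"
  define Q where "Q = 1 - q"
  have A: "A > 0" and AP: "A \<le> P" and PB: "P \<le> B" and AQ: "A \<le> Q" and QB: "Q \<le> B" and PQ: "P + Q = A + B"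
    using assms unfolding A_def B_def P_def Q_def by auto
  have P0: "P > 0" "Q > 0" "B > 0" using A AP AQ PB by auto
  have "A * B \<le> P * Q"
  proof -
    have "P * Q - A * B = (P - A) * (B - P)" using PQ by (simp add: algebra_simps) (smt (verit) PQ mult.commute right_diff_distrib')
    also have "\<dots> \<ge> 0" using AP PB by simp
    finally show ?thesis by simp
  qed
  then have "(A + B) / (P * Q) \<le> (A + B) / (A * B)"
    using A P0 by (intro divide_left_mono) auto
  moreover have "1 / P + 1 / Q = (A + B) / (P * Q)" using P0 PQ by (simp add: field_simps)
  moreover have "1 / A + 1 / B = (A + B) / (A * B)" using A P0 by (simp add: field_simps)
  ultimately have "1 / P + 1 / Q \<le> 1 / A + 1 / B" by simp
  then show ?thesis unfolding A_def B_def P_def Q_def by simp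
qed

locale cvx =
  fixes l :: real
  assumes l0: "0 \<le> l" and l1: "l < 1"
begin

definition g :: "real \<Rightarrow> real" where "g y = 1 / (1 - y)"
definition c :: real where "c = l + 1"
definition s :: real where "s = (g l - g (-1)) / c"
definition L :: "real \<Rightarrow> real" where "L y = g (-1) + (y + 1) * s"
definition phi :: "real \<Rightarrow> real" where "phi y = g y - L y"

lemma c_pos: "c > 0" unfolding c_def using l0 by simp

lemma phi_m1: "phi (-1) = 0" unfolding phi_def L_def by simp
lemma phi_l: "phi l = 0" unfolding phi_def L_def s_def c_def using l0 by (simp add: field_simps)

lemma phi_two:
  assumes "lo \<le> p" "p \<le> hi" "lo \<le> q" "q \<le> hi" "hi < 1" "p + q = lo + hi"
  shows "phi p + phi q \<le> phi lo + phi hi"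
proof -
  have "g p + g q \<le> g lo + g hi" unfolding g_def by (rule two_point[OF assms])
  moreover have "L p + L q = L lo + L hi"
  proof -
    have "L p + L q = 2 * g (-1) + (p + q + 2) * s" unfolding L_def by (simp add: algebra_simps)
    also have "\<dots> = 2 * g (-1) + (lo + hi + 2) * s" using assms(6) by simp
    also have "\<dots> = L lo + L hi" unfolding L_def by (simp add: algebra_simps)
    finally show ?thesis .
  qed
  ultimately show ?thesis unfolding phi_def by simp
qed

lemma invariant:
  assumes "finite I" and "\<forall>i\<in>I. -1 \<le> y i \<and> y i \<le> l"
  shows "\<exists>j::int. \<exists>\<rho>. -1 \<le> \<rho> \<and> \<rho> \<le> l \<and> (\<Sum>i\<in>I. y i + 1) = of_int j * c + (\<rho> + 1) \<and>
      (\<Sum>i\<in>I. phi (y i)) \<le> phi \<rho>"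
  using assms
proof (induction I rule: finite_induct)
  case empty
  show ?case by (rule exI[of _ 0], rule exI[of _ "-1"]) (use l0 phi_m1 in simp)
next
  case (insert x F)
  then obtain j \<rho> where r: "-1 \<le> \<rho>" "\<rho> \<le> l" and sm: "(\<Sum>i\<in>F. y i + 1) = of_int j * c + (\<rho> + 1)"
    and ph: "(\<Sum>i\<in>F. phi (y i)) \<le> phi \<rho>" by auto
  have t: "-1 \<le> y x" "y x \<le> l" using insert.prems by auto
  have S: "(\<Sum>i\<in>insert x F. y i + 1) = (y x + 1) + (\<Sum>i\<in>F. y i + 1)" using insert.hyps by simp
  have P: "(\<Sum>i\<in>insert x F. phi (y i)) = phi (y x) + (\<Sum>i\<in>F. phi (y i))" using insert.hyps by simp
  show ?case
  proof (cases "(\<rho> + 1) + (y x + 1) \<le> c")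
    case True
    define \<rho>' where "\<rho>' = \<rho> + y x + 1"
    have "phi \<rho> + phi (y x) \<le> phi (-1) + phi \<rho>'"
      using r t True l1 unfolding \<rho>'_def c_def by (intro phi_two) auto
    then have "(\<Sum>i\<in>insert x F. phi (y i)) \<le> phi \<rho>'" using P ph phi_m1 by simp
    moreover have "(\<Sum>i\<in>insert x F. y i + 1) = of_int j * c + (\<rho>' + 1)" using S sm unfolding \<rho>'_def by simp
    moreover have "-1 \<le> \<rho>'" "\<rho>' \<le> l" using r t True unfolding \<rho>'_def c_def by auto
    ultimately show ?thesis by blast
  next
    case False
    define \<rho>' where "\<rho>' = \<rho> + y x - l"
    have "phi \<rho> + phi (y x) \<le> phi \<rho>' + phi l"
      using r t False l1 unfolding \<rho>'_def c_def by (intro phi_two) auto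
    then have "(\<Sum>i\<in>insert x F. phi (y i)) \<le> phi \<rho>'" using P ph phi_l by simp
    moreover have "(\<Sum>i\<in>insert x F. y i + 1) = of_int (j + 1) * c + (\<rho>' + 1)"
      using S sm unfolding \<rho>'_def c_def by (simp add: algebra_simps)
    moreover have "-1 \<le> \<rho>'" "\<rho>' \<le> l" using r t False unfolding \<rho>'_def c_def by auto
    ultimately show ?thesis by blast
  qed
qed

lemma bound:
  assumes fin: "finite I" and rng: "\<forall>i\<in>I. -1 \<le> y i \<and> y i \<le> l" and sum0: "(\<Sum>i\<in>I. y i) = 0"
    and kdef: "k = \<lfloor>(l * (real (card I) + 1) + 1) / (l + 1)\<rfloor>"
  shows "(\<Sum>i\<in>I. 1 / (1 - y i)) \<le> (real (card I) - of_int k) / (1 - l) + (of_int k - 1) / 2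
           + 1 / (l * (real (card I) - of_int k) - of_int k + 2)"
proof -
  define n where "n = real (card I)"
  define x where "x = of_int k - 1 - (n - of_int k) * l"
  have cpos: "c > 0" by (rule c_pos)
  have q: "of_int k \<le> (l * (n + 1) + 1) / (l + 1)" "(l * (n + 1) + 1) / (l + 1) < of_int k + 1"
    unfolding kdef n_def by linarith+
  have lp: "l + 1 > 0" using l0 by simp
  have q1: "of_int k * (l + 1) \<le> l * (n + 1) + 1" using q(1) lp by (simp add: le_divide_eq)
  have q2: "l * (n + 1) + 1 < (of_int k + 1) * (l + 1)" using q(2) lp by (simp add: divide_less_eq)
  have xl: "x \<le> l" using q1 unfolding x_def by (simp add: algebra_simps)
  have xm: "-1 \<le> x" using q2 unfolding x_def by (simp add: algebra_simps)
  have nx: "n = (n - of_int k) * c + (x + 1)" unfolding x_def c_def by (simp add: algebra_simps)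
  obtain j :: int and \<rho> where r: "-1 \<le> \<rho>" "\<rho> \<le> l" and sm: "(\<Sum>i\<in>I. y i + 1) = of_int j * c + (\<rho> + 1)"
    and ph: "(\<Sum>i\<in>I. phi (y i)) \<le> phi \<rho>"
    using invariant[OF fin rng] by blast
  have "(\<Sum>i\<in>I. y i + 1) = n" using sum0 unfolding n_def by (simp add: sum.distrib)
  then have jr: "of_int j * c + (\<rho> + 1) = (n - of_int k) * c + (x + 1)" using sm nx by simp
  have phx: "phi \<rho> \<le> phi x"
  proof -
    have e: "(of_int j - (n - of_int k)) * c = x - \<rho>" using jr by (simp add: algebra_simps)
    have nint: "n - of_int k = of_int (int (card I) - k)" unfolding n_def by simp
    define m where "m = j - (int (card I) - k)"
    have e2: "of_int m * c = x - \<rho>" using e unfolding m_def nint by simp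
    consider "m = 0" | "m \<ge> 1" | "m \<le> -1" by linarith
    then show ?thesis
    proof cases
      case 1 then have "\<rho> = x" using e2 by simp
      then show ?thesis by simp
    next
      case 2
      then have "of_int m * c \<ge> c" using cpos by (simp add: mult_le_cancel_right1)
      then have "x - \<rho> \<ge> c" using e2 by simp
      then have "x = l" "\<rho> = -1" using xl r unfolding c_def by auto
      then show ?thesis using phi_l phi_m1 by simp
    next
      case 3
      then have "of_int m * c \<le> - c" using cpos
        by (metis mult_le_cancel_right mult_minus_left mult_1 of_int_le_iff of_int_minus of_int_1 order_less_imp_not_less)
      then have "\<rho> - x \<ge> c" using e2 by simp
      then have "\<rho> = l" "x = -1" using xm r unfolding c_def by auto
      then show ?thesis using phi_l phi_m1 by simp
    qed
  qed
  have "(\<Sum>i\<in>I. 1 / (1 - y i)) = (\<Sum>i\<in>I. L (y i)) + (\<Sum>i\<in>I. phi (y i))"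
    unfolding phi_def g_def by (simp add: sum.distrib[symmetric])
  also have "(\<Sum>i\<in>I. L (y i)) = n * g (-1) + n * s"
  proof -
    have "(\<Sum>i\<in>I. L (y i)) = n * g (-1) + (\<Sum>i\<in>I. y i + 1) * s"
      unfolding L_def n_def by (simp add: sum.distrib flip: sum_distrib_right)
    then show ?thesis using \<open>(\<Sum>i\<in>I. y i + 1) = n\<close> by simp
  qed
  also have "n * g (-1) + n * s + (\<Sum>i\<in>I. phi (y i)) \<le> n * g (-1) + n * s + phi x"
    using ph phx by simp
  also have "n * g (-1) + n * s + phi x = (n - of_int k) * g l + (of_int k - 1) * g (-1) + g x"
  proof -
    have "(n - of_int k) * g l + (of_int k - 1) * g (-1) + g x
        = (n - of_int k) * L l + (of_int k - 1) * L (-1) + L x + phi x"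
      using phi_l phi_m1 unfolding phi_def by (simp add: algebra_simps)
    also have "(n - of_int k) * L l + (of_int k - 1) * L (-1) + L x = n * g (-1) + ((n - of_int k) * c + (x + 1)) * s"
      unfolding L_def c_def by (simp add: algebra_simps)
    also have "(n - of_int k) * c + (x + 1) = n" using nx by simp
    finally show ?thesis by simp
  qed
  also have "\<dots> = (n - of_int k) / (1 - l) + (of_int k - 1) / 2 + 1 / (l * (n - of_int k) - of_int k + 2)"
    unfolding g_def x_def by (simp add: algebra_simps)
  finally show ?thesis unfolding n_def .
qed

end

lemma proots_lin: "proots (\<Prod>a\<leftarrow>as. [:- a, 1:]) = mset (as :: real list)"
proof (induction as)
  case Nil then show ?case by simp
next
  case (Cons a as)
  have nz: "(\<Prod>a\<leftarrow>as. [:- a, 1:]) \<noteq> (0 :: real poly)" by (auto simp: prod_list_zero_iff)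
  have e: "(\<Prod>a\<leftarrow>a # as. [:- a, 1:]) = [:- a, 1:] * (\<Prod>a\<leftarrow>as. [:- a, 1:])"
    by (simp only: list.map prod_list.Cons)
  have "proots (\<Prod>a\<leftarrow>a # as. [:- a, 1:]) = proots [:- a, 1:] + proots (\<Prod>a\<leftarrow>as. [:- a, 1:])"
    unfolding e by (rule proots_mult) (use nz in auto)
  then show ?case using Cons by simp
qed

lemma insort_max: "sorted xs \<Longrightarrow> \<forall>y\<in>set xs. y < x \<Longrightarrow> insort x xs = xs @ [x]"
  for xs :: "real list"
  by (induction xs) auto

lemma sorted_le_last:
  fixes xs :: "real list"
  assumes "sorted xs" "x \<in> set xs"
  shows "x \<le> last xs"
proof -
  obtain i where i: "i < length xs" "xs ! i = x" using assms(2) by (auto simp: in_set_conv_nth)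
  have ne: "xs \<noteq> []" using assms(2) by auto
  have "xs ! i \<le> xs ! (length xs - 1)" using assms(1) i by (intro sorted_nth_mono) auto
  then show ?thesis using i ne by (simp add: last_conv_nth)
qed

context sctx
begin

lemma charpoly: "char_poly (trans_mat N E) = (\<Prod>a\<leftarrow>map lam [0..<N]. [:- a, 1:])"
proof -
  define X where "X = Matrix.mat N N (\<lambda>(i,k). u k i / sqrt (d i))"
  define Y where "Y = Matrix.mat N N (\<lambda>(k,j). u k j * sqrt (d j))"
  define Lm where "Lm = Matrix.mat N N (\<lambda>(i,j). if i = j then lam i else 0)"
  define P where "P = trans_mat N E"
  have X: "X \<in> carrier_mat N N" and Y: "Y \<in> carrier_mat N N" and Lm: "Lm \<in> carrier_mat N N"
    and P: "P \<in> carrier_mat N N"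
    unfolding X_def Y_def Lm_def P_def trans_mat_def by auto
  have XL: "X * Lm \<in> carrier_mat N N" using X Lm by simp
  have XY: "X * Y = 1\<^sub>m N"
  proof (rule eq_matI)
    fix i j assume i: "i < dim_row (1\<^sub>m N)" and j: "j < dim_col (1\<^sub>m N)"
    then have i': "i < N" and j': "j < N" by auto
    have "(X * Y) $$ (i,j) = (\<Sum>k<N. u k i / sqrt (d i) * (u k j * sqrt (d j)))"
      using i' j' by (subst mult_mat_entry[OF X Y]) (auto simp: X_def Y_def)
    also have "\<dots> = (sqrt (d j) / sqrt (d i)) * (\<Sum>k<N. u k i * u k j)"
      unfolding sum_distrib_left by (intro sum.cong refl) (simp add: field_simps)
    also have "\<dots> = 1\<^sub>m N $$ (i,j)" using compl[OF i' j'] i' j' d_pos[OF i'] d_pos[OF j'] by simp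
    finally show "(X * Y) $$ (i,j) = 1\<^sub>m N $$ (i,j)" .
  qed (use X Y in auto)
  have YX: "Y * X = 1\<^sub>m N"
  proof (rule eq_matI)
    fix i j assume i: "i < dim_row (1\<^sub>m N)" and j: "j < dim_col (1\<^sub>m N)"
    then have i': "i < N" and j': "j < N" by auto
    have "(Y * X) $$ (i,j) = (\<Sum>k<N. u i k * sqrt (d k) * (u j k / sqrt (d k)))"
      using i' j' by (subst mult_mat_entry[OF Y X]) (auto simp: X_def Y_def)
    also have "\<dots> = (\<Sum>k<N. u i k * u j k)"
    proof (intro sum.cong refl)
      fix k assume "k \<in> {..<N}"
      then have "sqrt (d k) > 0" using d_pos by simp
      then show "u i k * sqrt (d k) * (u j k / sqrt (d k)) = u i k * u j k" by simp
    qed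
    also have "\<dots> = 1\<^sub>m N $$ (i,j)" using onb'[OF i' j'] i' j' unfolding ip_def by simp
    finally show "(Y * X) $$ (i,j) = 1\<^sub>m N $$ (i,j)" .
  qed (use X Y in auto)
  have PE: "P = X * Lm * Y"
  proof (rule eq_matI)
    fix i j assume i: "i < dim_row (X * Lm * Y)" and j: "j < dim_col (X * Lm * Y)"
    then have i': "i < N" and j': "j < N" using X Y Lm by auto
    have XLe: "(X * Lm) $$ (i,k) = u k i / sqrt (d i) * lam k" if k: "k < N" for k
    proof -
      have "(X * Lm) $$ (i,k) = (\<Sum>l<N. u l i / sqrt (d i) * (if l = k then lam l else 0))"
        using i' k by (subst mult_mat_entry[OF X Lm]) (auto simp: X_def Lm_def)
      also have "\<dots> = (\<Sum>l<N. if l = k then u l i / sqrt (d i) * lam l else 0)"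
        by (intro sum.cong refl) auto
      also have "\<dots> = u k i / sqrt (d i) * lam k" using k by simp
      finally show ?thesis .
    qed
    have "(X * Lm * Y) $$ (i,j) = (\<Sum>k<N. (X * Lm) $$ (i,k) * Y $$ (k,j))"
      using i' j' by (rule mult_mat_entry[OF XL Y])
    also have "\<dots> = (\<Sum>k<N. u k i / sqrt (d i) * lam k * (u k j * sqrt (d j)))"
      using j' by (intro sum.cong refl) (auto simp: XLe Y_def)
    also have "\<dots> = (sqrt (d j) / sqrt (d i)) * (\<Sum>k<N. lam k * u k i * u k j)"
      unfolding sum_distrib_left by (intro sum.cong refl) (simp add: field_simps)
    also have "(\<Sum>k<N. lam k * u k i * u k j) = Sm i j" using spec_exp[OF i' j'] by simp
    also have "(sqrt (d j) / sqrt (d i)) * Sm i j = (if E i j then 1 / d i else 0)"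
    proof (cases "E i j")
      case True
      have di: "d i > 0" "d j > 0" using d_pos i' j' by auto
      have "(sqrt (d j) / sqrt (d i)) * (1 / sqrt (d i * d j)) = 1 / (sqrt (d i) * sqrt (d i))"
        using di by (simp add: real_sqrt_mult field_simps)
      also have "sqrt (d i) * sqrt (d i) = d i" using di by simp
      finally show ?thesis using True unfolding Sm_def by simp
    qed (simp add: Sm_def)
    also have "\<dots> = P $$ (i,j)" unfolding P_def trans_mat_def d_def using i' j' by simp
    finally show "P $$ (i,j) = (X * Lm * Y) $$ (i,j)" by simp
  qed (use X Y Lm P in auto)
  have "similar_mat_wit P Lm X Y"
    unfolding similar_mat_wit_def Let_def using X Y Lm P XY YX PE by auto
  then have "similar_mat P Lm" unfolding similar_mat_def by blast
  then have "char_poly P = char_poly Lm" by (rule char_poly_similar)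
  also have "char_poly Lm = (\<Prod>a\<leftarrow>diag_mat Lm. [:- a, 1:])"
    by (rule char_poly_upper_triangular[OF Lm]) (auto simp: upper_triangular_def Lm_def)
  also have "diag_mat Lm = map lam [0..<N]" unfolding diag_mat_def Lm_def by auto
  finally show ?thesis unfolding P_def .
qed

lemma eigs_mset: "proots (char_poly (trans_mat N E)) = image_mset lam (mset_set {..<N})"
  unfolding charpoly proots_lin by (simp add: mset_set_upto_eq_mset_upto)

lemma lambda2_props:
  assumes k1: "k1 < N" "lam k1 = 1"
  shows "lambda2 N E \<in> lam ` ({..<N} - {k1})" and "\<forall>k<N. k \<noteq> k1 \<longrightarrow> lam k \<le> lambda2 N E"
proof -
  have uniq: "\<And>k. k < N \<Longrightarrow> lam k = 1 \<Longrightarrow> k = k1" using unique_k1 k1 by blast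
  define L' where "L' = image_mset lam (mset_set ({..<N} - {k1}))"
  have setL': "set_mset L' = lam ` ({..<N} - {k1})" unfolding L'_def by simp
  have lt1: "\<forall>y\<in>set_mset L'. y < 1"
  proof
    fix y assume "y \<in> set_mset L'"
    then obtain k where k: "k < N" "k \<noteq> k1" "y = lam k" unfolding setL' by auto
    then have "lam k \<noteq> 1" using uniq by blast
    then show "y < 1" using lam_bounds(2)[OF k(1)] k(3) by simp
  qed
  have "proots (char_poly (trans_mat N E)) = add_mset 1 L'"
    unfolding eigs_mset L'_def using k1 by (subst mset_set.remove[of _ k1]) auto
  define ys where "ys = sorted_list_of_multiset L'"
  have sys: "sorted ys" unfolding ys_def by simp
  have setys: "set ys = lam ` ({..<N} - {k1})" unfolding ys_def setL'[symmetric] by simp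
  have lt1ys: "\<forall>y\<in>set ys. y < 1" using lt1 unfolding ys_def by simp
  have "trans_eigenvalues N E = rev (ys @ [1])"
    unfolding trans_eigenvalues_def \<open>proots (char_poly (trans_mat N E)) = add_mset 1 L'\<close>
      sorted_list_of_multiset_insert ys_def[symmetric]
    using insort_max[OF sys, of 1] lt1ys by simp
  then have "trans_eigenvalues N E = 1 # rev ys" by simp
  then have l2: "lambda2 N E = rev ys ! 0" unfolding lambda2_def by simp
  have ne: "ys \<noteq> []"
  proof -
    define k' where "k' = (if k1 = 0 then 1 else 0::nat)"
    have "k' \<in> {..<N} - {k1}" unfolding k'_def using N2 by auto
    then show ?thesis using setys by auto
  qed
  have "rev ys ! 0 = last ys" using ne by (simp add: hd_rev[symmetric] hd_conv_nth)
  then have l2': "lambda2 N E = last ys" using l2 by simp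
  show "lambda2 N E \<in> lam ` ({..<N} - {k1})" unfolding l2' setys[symmetric] using ne by simp
  show "\<forall>k<N. k \<noteq> k1 \<longrightarrow> lam k \<le> lambda2 N E"
  proof (intro allI impI)
    fix k assume "k < N" "k \<noteq> k1"
    then have "lam k \<in> set ys" unfolding setys by auto
    then show "lam k \<le> lambda2 N E" unfolding l2' using sorted_le_last[OF sys] by blast
  qed
qed

end

context gctx
begin

lemma sum_deg: "(\<Sum>v<N. d v) = 2 * real (num_edges N E)"
proof -
  define D where "D = {(v,w). v < N \<and> w < N \<and> E v w}"
  define D1 where "D1 = {(v,w). v < w \<and> w < N \<and> E v w}"
  define D2 where "D2 = {(v,w). w < v \<and> v < N \<and> E v w}"
  have DS: "D = Sigma {..<N} (\<lambda>v. {w \<in> {0..<N}. E v w})" unfolding D_def by auto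
  have fD: "finite D" unfolding DS by auto
  have cD: "card D = (\<Sum>v<N. deg N E v)" unfolding DS deg_def by (subst card_SigmaI) auto
  have U: "D = D1 \<union> D2"
  proof
    show "D \<subseteq> D1 \<union> D2"
    proof
      fix p assume "p \<in> D"
      then obtain v w where p: "p = (v,w)" "v < N" "w < N" "E v w" unfolding D_def by auto
      then have "v \<noteq> w" using E_irrefl by auto
      then show "p \<in> D1 \<union> D2" using p unfolding D1_def D2_def by (auto simp: neq_iff)
    qed
    show "D1 \<union> D2 \<subseteq> D" unfolding D_def D1_def D2_def by auto
  qed
  have I: "D1 \<inter> D2 = {}" unfolding D1_def D2_def by auto
  have sw: "D2 = prod.swap ` D1"
  proof
    show "D2 \<subseteq> prod.swap ` D1"
    proof
      fix p assume "p \<in> D2"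
      then obtain v w where p: "p = (v,w)" "w < v" "v < N" "E v w" unfolding D2_def by auto
      then have "(w,v) \<in> D1" unfolding D1_def using E_sym by auto
      then show "p \<in> prod.swap ` D1" using p(1) by (intro image_eqI[of _ _ "(w,v)"]) auto
    qed
    show "prod.swap ` D1 \<subseteq> D2" unfolding D1_def D2_def using E_sym by auto
  qed
  have fD1: "finite D1" and fD2: "finite D2" using fD U by auto
  have "card D2 = card D1" unfolding sw by (rule card_image) simp
  then have "card D = 2 * card D1" using card_Un_disjoint[OF fD1 fD2 I] U by simp
  moreover have "num_edges N E = card D1" unfolding num_edges_def D1_def ..
  ultimately have "(\<Sum>v<N. deg N E v) = 2 * num_edges N E" using cD by simp
  then show ?thesis unfolding d_def by (metis of_nat_mult of_nat_numeral of_nat_sum)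
qed

end

context sctx
begin

lemma main_bound:
  defines "l \<equiv> lambda2 N E"
  defines "k \<equiv> \<lfloor>(l * (real N - 1) + 1) / (l + 1)\<rfloor>"
  defines "\<theta> \<equiv> l * (real N - of_int k - 2) - of_int k + 2"
  shows "add_deg_kirchhoff N E \<le>
           real N * (1/2 + (real N - of_int k - 3) / (1 - l) + of_int k / 2 + 1 / \<theta>)
           + 1 / (1 - l) * (2 * real (num_edges N E) * (\<Sum>j<N. 1 / real (deg N E j)) - real N)"
proof -
  obtain k1 where k1: "k1 < N" "lam k1 = 1" using exists_k1 by blast
  obtain kN where kN: "kN < N" "lam kN = -1" using exists_kN by blast
  have k1N: "k1 \<noteq> kN" using k1 kN by auto
  have uniq: "\<And>k. k < N \<Longrightarrow> lam k = 1 \<Longrightarrow> k = k1" using unique_k1 k1 by blast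
  have lmem: "l \<in> lam ` ({..<N} - {k1})" and lmax: "\<forall>k<N. k \<noteq> k1 \<longrightarrow> lam k \<le> l"
    using lambda2_props[OF k1] unfolding l_def by auto
  obtain k' where k': "k' < N" "k' \<noteq> k1" "l = lam k'" using lmem by auto
  have "lam k' \<noteq> 1" using uniq[of k'] k' by blast
  then have l1: "l < 1" using k' lam_bounds(2)[of k'] by simp
  have lm1: "-1 \<le> l" using k' lam_bounds(1)[of k'] by simp
  have KK: "K = {..<N} - {k1}"
  proof
    show "K \<subseteq> {..<N} - {k1}" unfolding K_def using k1 by auto
    show "{..<N} - {k1} \<subseteq> K" unfolding K_def using uniq by blast
  qed
  define K0 where "K0 = K - {kN}"
  have K0: "K0 = {..<N} - {k1} - {kN}" unfolding K0_def KK ..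
  have fK0: "finite K0" unfolding K0 by simp
  have kNK: "kN \<in> K" unfolding KK using kN k1N by simp
  have cK0: "card K0 = N - 2" unfolding K0 using k1 kN k1N by (simp add: card_Diff_singleton_if)
  have Mpos: "M > 0" by (rule M_pos)
  have dpos: "\<And>j. j < N \<Longrightarrow> d j > 0" using d_pos by simp
  define F where "F k = (real N + M * w k) / (1 - lam k)" for k
  have R: "add_deg_kirchhoff N E = F kN + (\<Sum>k\<in>K0. F k)"
    unfolding kirchhoff_formula F_def[symmetric] K0_def using finite_K kNK
    by (simp add: sum.remove)
  have wN: "w kN = real N / M"
  proof -
    have "w kN = (\<Sum>j<N. 1 / M)" unfolding w_def
    proof (intro sum.cong refl)
      fix j assume "j \<in> {..<N}"
      then have j: "j < N" by simp
      show "(u kN j)\<^sup>2 / d j = 1 / M" using kN_sq[OF kN j] dpos[OF j] by simp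
    qed
    then show ?thesis by simp
  qed
  have FN: "F kN = real N" unfolding F_def wN using kN Mpos by simp
  define S0 where "S0 = (\<Sum>k\<in>K0. 1 / (1 - lam k))"
  define Dsum where "Dsum = (\<Sum>j<N. 1 / d j)"
  have w_nonneg: "w k \<ge> 0" for k unfolding w_def using d_nonneg by (intro sum_nonneg) auto
  have FK0: "(\<Sum>k\<in>K0. F k) \<le> real N * S0 + M / (1 - l) * (\<Sum>k\<in>K0. w k)"
  proof -
    have "(\<Sum>k\<in>K0. F k) \<le> (\<Sum>k\<in>K0. real N * (1 / (1 - lam k)) + M / (1 - l) * w k)"
    proof (rule sum_mono)
      fix k assume kK: "k \<in> K0"
      then have k: "k < N" "k \<noteq> k1" unfolding K0 by auto
      have lk: "lam k \<le> l" using lmax k by blast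
      have p: "1 - l > 0" using l1 by simp
      have "M * w k / (1 - lam k) \<le> M * w k / (1 - l)"
        using lk p Mpos w_nonneg[of k] by (intro divide_left_mono) auto
      then show "F k \<le> real N * (1 / (1 - lam k)) + M / (1 - l) * w k"
        unfolding F_def by (simp add: add_divide_distrib)
    qed
    also have "\<dots> = real N * S0 + M / (1 - l) * (\<Sum>k\<in>K0. w k)"
      unfolding S0_def by (simp add: sum.distrib sum_distrib_left)
    finally show ?thesis .
  qed
  have wsum: "(\<Sum>k\<in>K0. w k) = Dsum - 2 * real N / M"
  proof -
    have "(\<Sum>k\<in>K0. w k) = (\<Sum>j<N. (\<Sum>k\<in>K0. (u k j)\<^sup>2) / d j)"
      unfolding w_def by (subst sum.swap) (simp add: sum_divide_distrib)
    also have "\<dots> = (\<Sum>j<N. 1 / d j - 2 / M)"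
    proof (intro sum.cong refl)
      fix j assume "j \<in> {..<N}"
      then have j: "j < N" by simp
      have "(\<Sum>k<N. (u k j)\<^sup>2) = 1" using compl[OF j j] by (simp add: power2_eq_square)
      moreover have "(\<Sum>k<N. (u k j)\<^sup>2) = (u k1 j)\<^sup>2 + ((u kN j)\<^sup>2 + (\<Sum>k\<in>K0. (u k j)\<^sup>2))"
      proof -
        have "(\<Sum>k<N. (u k j)\<^sup>2) = (u k1 j)\<^sup>2 + (\<Sum>k\<in>{..<N} - {k1}. (u k j)\<^sup>2)"
          using k1 by (simp add: sum.remove)
        also have "(\<Sum>k\<in>{..<N} - {k1}. (u k j)\<^sup>2) = (u kN j)\<^sup>2 + (\<Sum>k\<in>K0. (u k j)\<^sup>2)"
          unfolding K0 using kN k1N by (subst sum.remove[of _ kN]) auto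
        finally show ?thesis .
      qed
      ultimately have X: "(\<Sum>k\<in>K0. (u k j)\<^sup>2) = 1 - d j / M - d j / M"
        using k1_sq[OF k1 j] kN_sq[OF kN j] by simp
      then show "(\<Sum>k\<in>K0. (u k j)\<^sup>2) / d j = 1 / d j - 2 / M"
      proof -
        have "(\<Sum>k\<in>K0. (u k j)\<^sup>2) / d j = (1 - d j / M - d j / M) / d j" using X by simp
        also have "\<dots> = 1 / d j - (d j / M) / d j - (d j / M) / d j" by (simp add: diff_divide_distrib)
        also have "(d j / M) / d j = 1 / M" using dpos[OF j] by simp
        finally show ?thesis by simp
      qed
    qed
    also have "\<dots> = Dsum - 2 * real N / M" unfolding Dsum_def by (simp add: sum_subtractf)
    finally show ?thesis .
  qed
  have Rb: "add_deg_kirchhoff N E \<le> real N + real N * S0 + (M * Dsum - 2 * real N) / (1 - l)"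
  proof -
    have "add_deg_kirchhoff N E \<le> real N + (real N * S0 + M / (1 - l) * (Dsum - 2 * real N / M))"
      using R FN FK0 wsum by simp
    also have "M / (1 - l) * (Dsum - 2 * real N / M) = (M * (Dsum - 2 * real N / M)) / (1 - l)"
      by simp
    also have "M * (Dsum - 2 * real N / M) = M * Dsum - 2 * real N"
      using Mpos by (simp add: right_diff_distrib)
    finally show ?thesis by simp
  qed
  have Mm: "M = 2 * real (num_edges N E)" unfolding M_def by (rule sum_deg)
  have Dd: "(\<Sum>j<N. 1 / real (deg N E j)) = Dsum" unfolding Dsum_def d_def ..
  have S0b: "S0 \<le> (real N - of_int k - 2) / (1 - l) + (of_int k - 1) / 2 + 1 / \<theta>"
  proof (cases "N = 2")
    case True
    then have "K0 = {}" using cK0 fK0 by simp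
    then have S0z: "S0 = 0" unfolding S0_def by simp
    have "{..<N} - {k1} = {kN}" using True k1 kN k1N by auto
    then have "l = -1" using lmem kN by simp
    then have "k = 0" unfolding k_def by simp
    then have "\<theta> = 2" unfolding \<theta>_def using True \<open>l = -1\<close> by simp
    show ?thesis using S0z True \<open>k = 0\<close> \<open>\<theta> = 2\<close> \<open>l = -1\<close> by simp
  next
    case False
    then have N3: "N \<ge> 3" using N2 by simp
    then have "K0 \<noteq> {}" using cK0 by auto
    have sum0: "(\<Sum>k\<in>K0. lam k) = 0"
    proof -
      have "(\<Sum>k<N. lam k) = lam k1 + (lam kN + (\<Sum>k\<in>K0. lam k))"
      proof -
        have "(\<Sum>k<N. lam k) = lam k1 + (\<Sum>k\<in>{..<N} - {k1}. lam k)"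
          using k1 by (simp add: sum.remove)
        also have "(\<Sum>k\<in>{..<N} - {k1}. lam k) = lam kN + (\<Sum>k\<in>K0. lam k)"
          unfolding K0 using kN k1N by (subst sum.remove[of _ kN]) auto
        finally show ?thesis .
      qed
      then show ?thesis using trace0 k1 kN by simp
    qed
    have l0: "0 \<le> l"
    proof (rule ccontr)
      assume "\<not> 0 \<le> l"
      then have "\<forall>k\<in>K0. lam k < 0" using lmax unfolding K0 by force
      then have "(\<Sum>k\<in>K0. - lam k) > 0" using \<open>K0 \<noteq> {}\<close> fK0 by (intro sum_pos) auto
      then have "(\<Sum>k\<in>K0. lam k) < 0" by (simp add: sum_negf)
      then show False using sum0 by simp
    qed
    interpret cvx l using l0 l1 by unfold_locales
    have rng: "\<forall>i\<in>K0. -1 \<le> lam i \<and> lam i \<le> l"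
      using lmax lam_bounds unfolding K0 by auto
    have rc: "real (card K0) = real N - 2" unfolding cK0 using N2 by simp
    have kd: "k = \<lfloor>(l * (real (card K0) + 1) + 1) / (l + 1)\<rfloor>" unfolding k_def rc by (simp add: algebra_simps)
    have "S0 \<le> (real (card K0) - of_int k) / (1 - l) + (of_int k - 1) / 2
           + 1 / (l * (real (card K0) - of_int k) - of_int k + 2)"
      unfolding S0_def by (rule bound[OF fK0 rng sum0 kd])
    then show ?thesis unfolding rc \<theta>_def by (simp add: algebra_simps)
  qed
  have p: "1 - l > 0" using l1 by simp
  have Npos: "real N > 0" using N2 by simp
  have "real N + real N * S0 + (M * Dsum - 2 * real N) / (1 - l)
      \<le> real N + real N * ((real N - of_int k - 2) / (1 - l) + (of_int k - 1) / 2 + 1 / \<theta>)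
        + (M * Dsum - 2 * real N) / (1 - l)"
    using S0b Npos by simp
  also have "\<dots> = real N * (1/2 + (real N - of_int k - 3) / (1 - l) + of_int k / 2 + 1 / \<theta>)
           + 1 / (1 - l) * (M * Dsum - real N)"
  proof -
    define r where "r = 1 / (1 - l)"
    define t where "t = 1 / \<theta>"
    have d1: "x / (1 - l) = x * r" for x unfolding r_def by simp
    show ?thesis unfolding d1 t_def[symmetric] unfolding r_def[symmetric]
      by (simp add: algebra_simps add_divide_distrib diff_divide_distrib)
  qed
  finally show ?thesis using Rb unfolding Mm Dd by simp
qed

end

theorem corollary6:
  fixes N :: nat and E :: "nat \<Rightarrow> nat \<Rightarrow> bool"
  assumes "simple_graph N E" and "connected_graph N E" and "bipartite_graph N E"
    and "N \<ge> 2"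
  defines "l \<equiv> lambda2 N E"
  defines "k \<equiv> \<lfloor>(l * (real N - 1) + 1) / (l + 1)\<rfloor>"
  defines "\<theta> \<equiv> l * (real N - of_int k - 2) - of_int k + 2"
  shows "add_deg_kirchhoff N E \<le>
           real N * (1/2 + (real N - of_int k - 3) / (1 - l) + of_int k / 2 + 1 / \<theta>)
           + 1 / (1 - l) * (2 * real (num_edges N E) * (\<Sum>j<N. 1 / real (deg N E j)) - real N)"
proof -
  interpret G: gctx N E using assms(1,2,4) by unfold_locales
  obtain u lam where u: "orthonormal N N u" "\<forall>a<N. \<forall>i<N. mv N G.Sm (u a) i = lam a * u a i"
    using spectral[OF G.symm_Sm] by blast
  interpret S: sctx N E u lam using assms(3) u by unfold_locales
  show ?thesis unfolding \<theta>_def k_def l_def by (rule S.main_bound)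
qed

end
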